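(* Let $F$ be a finite field of characteristic $2$, let $n\ge 1$, and let $R$ be an even integer. Then there is a finite set of homogeneous polynomials of degree $R+1$ in the coefficients $a_{ij}$ ($1\le i\le j\le n$), with coefficients in $F$, such that for every quadratic form $Q(x_1,\ldots,x_n)=\sum_{1\le i\le j\le n}a_{ij}x_ix_j$ over $F$, these polynomials all vanish at $(a_{ij})$ if and only if $\mathrm{Rank}(Q)\le R$.
   Context: The rank of a quadratic form $Q$ over a field $F$ is the minimal integer $m$ such that there exist a quadratic form $Q'$ over $F$ in $m$ variables and linear forms $L_1,\ldots,L_m$ over $F$ with $Q(x_1,\ldots,x_n)=Q'(L_1,\ldots,L_m)$. *)

theory Defs
  imports Main
begin

text \<open>A quadratic form in n variables over a field, given by its coefficients
  a i j for 1 \<le> i \<le> j \<le> n (other entries of a are ignored), evaluated at x.\<close>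
definition qform :: "nat \<Rightarrow> (nat \<Rightarrow> nat \<Rightarrow> 'a::field) \<Rightarrow> (nat \<Rightarrow> 'a) \<Rightarrow> 'a" where
  "qform n a x = (\<Sum>i=1..n. \<Sum>j=i..n. a i j * x i * x j)"

definition qrank :: "nat \<Rightarrow> (nat \<Rightarrow> nat \<Rightarrow> 'a::field) \<Rightarrow> nat" where
  "qrank n a = (LEAST m. \<exists>(b :: nat \<Rightarrow> nat \<Rightarrow> 'a) (l :: nat \<Rightarrow> nat \<Rightarrow> 'a).
      \<forall>x. qform n a x = qform m b (\<lambda>k. \<Sum>i=1..n. l k i * x i))"

definition qvars :: "nat \<Rightarrow> (nat \<times> nat) set" where
  "qvars n = {(i, j). 1 \<le> i \<and> i \<le> j \<and> j \<le> n}"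

text \<open>Monomials of total degree d in the variables qvars n, as exponent functions.\<close>
definition hmonos :: "nat \<Rightarrow> nat \<Rightarrow> ((nat \<times> nat) \<Rightarrow> nat) set" where
  "hmonos n d = {e. (\<forall>v. v \<notin> qvars n \<longrightarrow> e v = 0) \<and> (\<Sum>v\<in>qvars n. e v) = d}"

text \<open>A homogeneous polynomial of degree d in the variables qvars n, with coefficients
  in 'a, is given by its coefficient function on monomials, supported on hmonos n d.\<close>
definition homog_poly :: "nat \<Rightarrow> nat \<Rightarrow> (((nat \<times> nat) \<Rightarrow> nat) \<Rightarrow> 'a::field) \<Rightarrow> bool" where
  "homog_poly n d p \<longleftrightarrow> (\<forall>e. p e \<noteq> 0 \<longrightarrow> e \<in> hmonos n d)"

definition eval_homog :: "nat \<Rightarrow> nat \<Rightarrow> (((nat \<times> nat) \<Rightarrow> nat) \<Rightarrow> 'a::field)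
    \<Rightarrow> (nat \<Rightarrow> nat \<Rightarrow> 'a) \<Rightarrow> 'a" where
  "eval_homog n d p a = (\<Sum>e\<in>hmonos n d. p e * (\<Prod>v\<in>qvars n. a (fst v) (snd v) ^ e v))"

end

theory Submission
  imports Defs "HOL-Library.FuncSet"
begin


section \<open>Pfaffians (sign-free)\<close>

fun pfn :: "nat \<Rightarrow> (nat \<Rightarrow> nat \<Rightarrow> 'a::comm_ring_1) \<Rightarrow> nat set \<Rightarrow> 'a" where
  "pfn 0 g I = 1"
| "pfn (Suc n) g I = (if I = {} then 1 else
      (\<Sum>j\<in>I - {Min I}. g (Min I) j * pfn n g (I - {Min I, j})))"

lemma card_minus2:
  assumes "finite I" "m \<in> I" "j \<in> I" "j \<noteq> m"
  shows "card (I - {m, j}) = card I - 2"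
proof -
  have "I - {m,j} = (I - {m}) - {j}" by auto
  then show ?thesis using assms by (simp add: card_Diff_singleton_if)
qed

lemma pfn_indep:
  "finite I \<Longrightarrow> card I \<le> n \<Longrightarrow> card I \<le> n' \<Longrightarrow> pfn n g I = pfn n' g I"
proof (induction n arbitrary: n' I)
  case 0
  then show ?case by (cases n') auto
next
  case (Suc n)
  show ?case
  proof (cases n')
    case 0
    then show ?thesis using Suc by auto
  next
    case (Suc n'')
    show ?thesis
    proof (cases "I = {}")
      case True
      then show ?thesis using Suc by simp
    next
      case False
      have m: "Min I \<in> I" using False Suc.prems by simp
      have "pfn n g (I - {Min I, j}) = pfn n'' g (I - {Min I, j})" if "j \<in> I - {Min I}" for j
      proof (rule Suc.IH)
        have "card (I - {Min I, j}) = card I - 2"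
          using card_minus2[OF Suc.prems(1) m] that by auto
        moreover have "card I \<ge> 2"
        proof -
          have "{Min I, j} \<subseteq> I" using m that by auto
          then have "card {Min I, j} \<le> card I" using Suc.prems(1) card_mono by blast
          then show ?thesis using that by auto
        qed
        ultimately show "card (I - {Min I, j}) \<le> n" "card (I - {Min I, j}) \<le> n''"
          using Suc.prems \<open>n' = Suc n''\<close> by auto
      qed (use Suc.prems in auto)
      then show ?thesis using False \<open>n' = Suc n''\<close>
        by (simp only: pfn.simps if_False) (rule sum.cong, simp_all)
    qed
  qed
qed

definition pf :: "(nat \<Rightarrow> nat \<Rightarrow> 'a::comm_ring_1) \<Rightarrow> nat set \<Rightarrow> 'a" where
  "pf g I = pfn (card I) g I"

lemma pf_empty [simp]: "pf g {} = 1"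
  by (simp add: pf_def)

lemma pf_rec:
  assumes "finite I" "I \<noteq> {}"
  shows "pf g I = (\<Sum>j\<in>I - {Min I}. g (Min I) j * pf g (I - {Min I, j}))"
proof -
  obtain c where c: "card I = Suc c" using assms by (cases "card I") auto
  have m: "Min I \<in> I" using assms by simp
  have "pfn c g (I - {Min I, j}) = pf g (I - {Min I, j})" if "j \<in> I - {Min I}" for j
    unfolding pf_def
  proof (rule pfn_indep)
    show "card (I - {Min I, j}) \<le> c" using card_minus2[OF assms(1) m, of j] that c by auto
  qed (use assms in auto)
  then show ?thesis unfolding pf_def using c assms
    by (simp only: pfn.simps if_False) (rule sum.cong, simp_all add: pf_def)
qed


lemma pf_cong:
  assumes "finite I" "\<And>x y. x \<in> I \<Longrightarrow> y \<in> I \<Longrightarrow> g x y = g' x y"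
  shows "pf g I = pf g' I"
  using assms
proof (induction "card I" arbitrary: I rule: less_induct)
  case less
  show ?case
  proof (cases "I = {}")
    case True then show ?thesis by simp
  next
    case False
    have m: "Min I \<in> I" using False less.prems by simp
    have "pf g (I - {Min I, j}) = pf g' (I - {Min I, j})" if "j \<in> I - {Min I}" for j
    proof (rule less.hyps)
      show "card (I - {Min I, j}) < card I"
        using less.prems(1) m that by (intro psubset_card_mono) auto
    qed (use less.prems in auto)
    then show ?thesis using pf_rec[OF less.prems(1) False, of g] pf_rec[OF less.prems(1) False, of g'] m less.prems
      by (auto intro!: sum.cong)
  qed
qed

lemma sum_swap_diff:
  assumes "finite A"
  shows "(\<Sum>p\<in>A. \<Sum>j\<in>A - {p}. F p j) = (\<Sum>j\<in>A. \<Sum>p\<in>A - {j}. F p j)"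
proof -
  have s: "(\<Sum>p\<in>A. \<Sum>j\<in>{j. j \<in> A \<and> p \<noteq> j}. F p j) = (\<Sum>j\<in>A. \<Sum>p\<in>{p. p \<in> A \<and> p \<noteq> j}. F p j)"
    by (rule sum.swap_restrict[OF assms assms])
  have e: "\<And>p. {j. j \<in> A \<and> p \<noteq> j} = A - {p}" by auto
  have e2: "\<And>j. {p. p \<in> A \<and> p \<noteq> j} = A - {j}" by auto
  show ?thesis using s by (simp only: e e2)
qed

lemma pf_expand:
  assumes "finite I" "i \<in> I" "\<And>x y. x \<in> I \<Longrightarrow> y \<in> I \<Longrightarrow> g x y = g y x"
  shows "pf g I = (\<Sum>j\<in>I - {i}. g i j * pf g (I - {i, j}))"
  using assms
proof (induction "card I" arbitrary: I i rule: less_induct)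
  case less
  have ne: "I \<noteq> {}" using less.prems by auto
  define m where "m = Min I"
  have mI: "m \<in> I" using ne less.prems unfolding m_def by simp
  have mle: "\<And>x. x \<in> I \<Longrightarrow> m \<le> x" using less.prems unfolding m_def by simp
  show ?case
  proof (cases "i = m")
    case True
    then show ?thesis unfolding m_def by (rule ssubst) (rule pf_rec[OF less.prems(1) ne])
  next
    case False
    define A where "A = I - {m, i}"
    have fA: "finite A" using less.prems unfolding A_def by simp
    have L: "pf g I = g m i * pf g (I - {m, i}) + (\<Sum>p\<in>A. g m p * pf g (I - {m, p}))"
    proof -
      have "pf g I = (\<Sum>p\<in>I - {m}. g m p * pf g (I - {m, p}))"
        unfolding m_def by (rule pf_rec[OF less.prems(1) ne])
      also have "\<dots> = g m i * pf g (I - {m, i}) + (\<Sum>p\<in>I - {m} - {i}. g m p * pf g (I - {m, p}))"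
        using False less.prems by (subst sum.remove[of _ i]) auto
      also have "I - {m} - {i} = A" unfolding A_def by auto
      finally show ?thesis .
    qed
    have L2: "pf g (I - {m, p}) = (\<Sum>j\<in>A - {p}. g i j * pf g (I - {m, i, p, j}))" if "p \<in> A" for p
    proof -
      have "pf g (I - {m, p}) = (\<Sum>j\<in>(I - {m, p}) - {i}. g i j * pf g ((I - {m, p}) - {i, j}))"
      proof (rule less.hyps)
        show "card (I - {m, p}) < card I" using less.prems(1) mI that
          by (intro psubset_card_mono) (auto simp: A_def)
      qed (use less.prems that False in \<open>auto simp: A_def\<close>)
      also have "\<dots> = (\<Sum>j\<in>A - {p}. g i j * pf g (I - {m, i, p, j}))"
      proof (rule sum.cong)
        fix x assume "x \<in> A - {p}"
        have "I - {m, p} - {i, x} = I - {m, i, p, x}" by auto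
        then show "g i x * pf g (I - {m, p} - {i, x}) = g i x * pf g (I - {m, i, p, x})" by simp
      qed (auto simp: A_def)
      finally show ?thesis .
    qed
    have R: "(\<Sum>j\<in>I - {i}. g i j * pf g (I - {i, j})) =
        g i m * pf g (I - {i, m}) + (\<Sum>j\<in>A. g i j * pf g (I - {i, j}))"
    proof -
      have "(\<Sum>j\<in>I - {i}. g i j * pf g (I - {i, j})) =
          g i m * pf g (I - {i, m}) + (\<Sum>j\<in>I - {i} - {m}. g i j * pf g (I - {i, j}))"
        using False less.prems mI by (subst sum.remove[of _ m]) auto
      also have "I - {i} - {m} = A" unfolding A_def by auto
      finally show ?thesis .
    qed
    have R2: "pf g (I - {i, j}) = (\<Sum>p\<in>A - {j}. g m p * pf g (I - {m, i, p, j}))" if "j \<in> A" for j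
    proof -
      have ne2: "I - {i, j} \<noteq> {}" using mI that False by (auto simp: A_def)
      have mm: "Min (I - {i, j}) = m"
        using mI mle that False less.prems(1) by (intro Min_eqI) (auto simp: A_def)
      have "pf g (I - {i, j}) = (\<Sum>p\<in>(I - {i, j}) - {m}. g m p * pf g ((I - {i, j}) - {m, p}))"
        using pf_rec[OF _ ne2, of g] less.prems(1) mm by simp
      also have "\<dots> = (\<Sum>p\<in>A - {j}. g m p * pf g (I - {m, i, p, j}))"
      proof (rule sum.cong)
        fix x assume "x \<in> A - {j}"
        have "I - {i, j} - {m, x} = I - {m, i, x, j}" by auto
        then show "g m x * pf g (I - {i, j} - {m, x}) = g m x * pf g (I - {m, i, x, j})" by simp
      qed (auto simp: A_def)
      finally show ?thesis .
    qed
    have "(\<Sum>p\<in>A. g m p * pf g (I - {m, p})) = (\<Sum>p\<in>A. \<Sum>j\<in>A - {p}. g m p * (g i j * pf g (I - {m, i, p, j})))"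
      using L2 by (simp add: sum_distrib_left)
    also have "\<dots> = (\<Sum>j\<in>A. \<Sum>p\<in>A - {j}. g m p * (g i j * pf g (I - {m, i, p, j})))"
      by (rule sum_swap_diff[OF fA])
    also have "\<dots> = (\<Sum>j\<in>A. g i j * pf g (I - {i, j}))"
      using R2 by (simp add: sum_distrib_left mult.left_commute)
    finally have S: "(\<Sum>p\<in>A. g m p * pf g (I - {m, p})) = (\<Sum>j\<in>A. g i j * pf g (I - {i, j}))" .
    have "g m i = g i m" using less.prems mI by auto
    moreover have "I - {m, i} = I - {i, m}" by auto
    ultimately show ?thesis using L R S by simp
  qed
qed


lemma char2_two: "CHAR('a::comm_ring_1) = 2 \<Longrightarrow> (2::'a) = 0"
  using of_nat_CHAR[where 'a='a] by simp

lemma char2_double: "CHAR('a::comm_ring_1) = 2 \<Longrightarrow> (x::'a) + x = 0"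
  using char2_two[where 'a='a] by (metis mult_2 mult_zero_left)

lemma sum_pairs_char2:
  fixes h :: "nat \<Rightarrow> nat \<Rightarrow> 'a::comm_ring_1"
  assumes "CHAR('a) = 2" "finite A" "\<And>j p. h j p = h p j"
  shows "(\<Sum>j\<in>A. \<Sum>p\<in>A - {j}. h j p) = 0"
  using assms(2)
proof (induction A rule: finite_induct)
  case empty then show ?case by simp
next
  case (insert x A)
  have a: "insert x A - {x} = A" using insert by auto
  have b: "\<And>j. j \<in> A \<Longrightarrow> insert x A - {j} = insert x (A - {j})" using insert by auto
  have "(\<Sum>j\<in>insert x A. \<Sum>p\<in>insert x A - {j}. h j p)
      = (\<Sum>p\<in>A. h x p) + (\<Sum>j\<in>A. \<Sum>p\<in>insert x A - {j}. h j p)"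
    using insert a by simp
  also have "(\<Sum>j\<in>A. \<Sum>p\<in>insert x A - {j}. h j p) = (\<Sum>j\<in>A. h j x + (\<Sum>p\<in>A - {j}. h j p))"
    using insert b by (intro sum.cong) auto
  also have "\<dots> = (\<Sum>p\<in>A. h x p) + 0"
    using insert by (simp add: sum.distrib assms(3)[of _ x])
  finally show ?case using char2_double[OF assms(1)] by simp
qed

lemma pf_zero_row:
  assumes "finite I" "i \<in> I" "\<And>x y. x \<in> I \<Longrightarrow> y \<in> I \<Longrightarrow> g x y = g y x"
    "\<And>y. y \<in> I \<Longrightarrow> g i y = 0"
  shows "pf g I = 0"
  using pf_expand[OF assms(1-3)] assms(4) by simp

lemma pf_alt:
  fixes g :: "nat \<Rightarrow> nat \<Rightarrow> 'a::comm_ring_1"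
  assumes ch: "CHAR('a) = 2" and fin: "finite I" and iI: "i \<in> I" and lI: "l \<in> I" and il: "i \<noteq> l"
    and sym: "\<And>x y. x \<in> I \<Longrightarrow> y \<in> I \<Longrightarrow> g x y = g y x"
    and diag: "\<And>x. x \<in> I \<Longrightarrow> g x x = 0"
    and row: "\<And>z. z \<in> I \<Longrightarrow> g i z = g l z"
  shows "pf g I = 0"
proof -
  define A where "A = I - {i, l}"
  have fA: "finite A" using fin by (simp add: A_def)
  have "pf g I = (\<Sum>j\<in>I - {i}. g i j * pf g (I - {i, j}))"
    by (rule pf_expand[OF fin iI sym])
  also have "\<dots> = g i l * pf g (I - {i, l}) + (\<Sum>j\<in>I - {i} - {l}. g i j * pf g (I - {i, j}))"
    using lI il fin by (subst sum.remove[of _ l]) auto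
  also have "g i l = 0" using row[OF lI] diag[OF lI] by simp
  also have "I - {i} - {l} = A" by (auto simp: A_def)
  also have "(\<Sum>j\<in>A. g i j * pf g (I - {i, j})) =
      (\<Sum>j\<in>A. \<Sum>p\<in>A - {j}. g i j * g i p * pf g (I - {i, l, j, p}))"
  proof (rule sum.cong)
    fix j assume j: "j \<in> A"
    have "pf g (I - {i, j}) = (\<Sum>p\<in>(I - {i, j}) - {l}. g l p * pf g ((I - {i, j}) - {l, p}))"
      by (rule pf_expand) (use fin lI il j sym in \<open>auto simp: A_def\<close>)
    also have "\<dots> = (\<Sum>p\<in>A - {j}. g i p * pf g (I - {i, l, j, p}))"
    proof (rule sum.cong)
      fix p assume p: "p \<in> A - {j}"
      have "I - {i, j} - {l, p} = I - {i, l, j, p}" by auto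
      then show "g l p * pf g (I - {i, j} - {l, p}) = g i p * pf g (I - {i, l, j, p})"
        using row[of p] p by (simp add: A_def)
    qed (auto simp: A_def)
    finally show "g i j * pf g (I - {i, j}) = (\<Sum>p\<in>A - {j}. g i j * g i p * pf g (I - {i, l, j, p}))"
      by (simp add: sum_distrib_left mult.assoc)
  qed simp
  also have "\<dots> = 0"
  proof (rule sum_pairs_char2[OF ch fA])
    fix j p
    have "{i, l, j, p} = {i, l, p, j}" by auto
    then show "g i j * g i p * pf g (I - {i, l, j, p}) = g i p * g i j * pf g (I - {i, l, p, j})"
      by (simp add: mult.commute)
  qed
  finally show ?thesis by simp
qed

lemma pf_relabel:
  assumes "finite J" "inj_on h J" "\<And>x y. x \<in> J \<Longrightarrow> y \<in> J \<Longrightarrow> g' (h x) (h y) = g x y"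
    "\<And>x y. x \<in> h ` J \<Longrightarrow> y \<in> h ` J \<Longrightarrow> g' x y = g' y x"
  shows "pf g' (h ` J) = pf g J"
  using assms
proof (induction "card J" arbitrary: J rule: less_induct)
  case less
  show ?case
  proof (cases "J = {}")
    case True then show ?thesis by simp
  next
    case False
    define m where "m = Min J"
    have mJ: "m \<in> J" using False less.prems unfolding m_def by simp
    have "pf g' (h ` J) = (\<Sum>y\<in>h ` J - {h m}. g' (h m) y * pf g' (h ` J - {h m, y}))"
      by (rule pf_expand) (use less.prems mJ in auto)
    also have "h ` J - {h m} = h ` (J - {m})"
      using less.prems(2) mJ by (auto simp: inj_on_def)
    also have "(\<Sum>y\<in>h ` (J - {m}). g' (h m) y * pf g' (h ` J - {h m, y})) =
        (\<Sum>j\<in>J - {m}. g' (h m) (h j) * pf g' (h ` J - {h m, h j}))"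
      by (subst sum.reindex) (use less.prems(2) in \<open>auto simp: inj_on_def\<close>)
    also have "\<dots> = (\<Sum>j\<in>J - {m}. g m j * pf g (J - {m, j}))"
    proof (rule sum.cong)
      fix j assume j: "j \<in> J - {m}"
      have e: "h ` J - {h m, h j} = h ` (J - {m, j})"
        using less.prems(2) mJ j by (auto simp: inj_on_def)
      have "pf g' (h ` (J - {m, j})) = pf g (J - {m, j})"
      proof (rule less.hyps)
        show "card (J - {m, j}) < card J" using less.prems(1) mJ j by (intro psubset_card_mono) auto
        show "inj_on h (J - {m, j})" using less.prems(2) by (rule inj_on_subset) auto
      qed (use less.prems in auto)
      then show "g' (h m) (h j) * pf g' (h ` J - {h m, h j}) = g m j * pf g (J - {m, j})"
        using e less.prems(3) mJ j by simp
    qed simp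
    also have "\<dots> = pf g J" unfolding m_def by (rule pf_rec[symmetric]) (use less.prems False in auto)
    finally show ?thesis .
  qed
qed



section \<open>Quadratic and bilinear forms\<close>

definition Bq :: "nat \<Rightarrow> (nat \<Rightarrow> nat \<Rightarrow> 'a::field) \<Rightarrow> (nat \<Rightarrow> 'a) \<Rightarrow> (nat \<Rightarrow> 'a) \<Rightarrow> 'a" where
  "Bq n a x y = qform n a (\<lambda>k. x k + y k) - qform n a x - qform n a y"

lemma Bq_formula:
  "Bq n a x y = (\<Sum>i=1..n. \<Sum>j=i..n. a i j * (x i * y j + y i * x j))"
  unfolding Bq_def qform_def
  by (simp add: sum_subtractf[symmetric] algebra_simps)

lemma qform_cong:
  assumes "\<And>k. k \<in> {1..n} \<Longrightarrow> x k = y k"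
  shows "qform n a x = qform n a y"
  unfolding qform_def using assms by (intro sum.cong refl) auto

lemma Bq_cong:
  assumes "\<And>k. k \<in> {1..n} \<Longrightarrow> x k = y k"
  shows "Bq n a x z = Bq n a y z"
  unfolding Bq_formula using assms by (intro sum.cong refl) auto

lemma Bq_sym: "Bq n a x y = Bq n a y x"
  unfolding Bq_def by (simp add: add.commute)

lemma Bq_diag:
  assumes "CHAR('a::field) = 2"
  shows "Bq n (a :: nat \<Rightarrow> nat \<Rightarrow> 'a) x x = 0"
  unfolding Bq_formula by (simp add: char2_double[OF assms])

lemma qform_add: "qform n a (\<lambda>k. x k + y k) = qform n a x + qform n a y + Bq n a x y"
  unfolding Bq_def by simp

lemma qform_smult: "qform n a (\<lambda>k. c * x k) = c ^ 2 * qform n a x"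
  unfolding qform_def by (simp add: sum_distrib_left power2_eq_square algebra_simps)

lemma qform_zero: "qform n a (\<lambda>k. 0) = 0"
  unfolding qform_def by simp

lemma Bq_add: "Bq n a (\<lambda>k. x k + y k) z = Bq n a x z + Bq n a y z"
  unfolding Bq_formula by (simp add: sum.distrib[symmetric] algebra_simps)

lemma Bq_smult: "Bq n a (\<lambda>k. c * x k) z = c * Bq n a x z"
  unfolding Bq_formula by (simp add: sum_distrib_left algebra_simps)

lemma Bq_diff: "Bq n a (\<lambda>k. x k - y k) z = Bq n a x z - Bq n a y z"
  unfolding Bq_formula by (simp add: sum_subtractf[symmetric] algebra_simps)

lemma Bq_lincomb:
  assumes "finite L" "\<And>k. k \<in> {1..n} \<Longrightarrow> y k = (\<Sum>l\<in>L. c l * w l k)"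
  shows "Bq n a y z = (\<Sum>l\<in>L. c l * Bq n a (w l) z)"
proof -
  have "Bq n a y z = Bq n a (\<lambda>k. \<Sum>l\<in>L. c l * w l k) z"
    by (rule Bq_cong) (use assms in auto)
  also have "\<dots> = (\<Sum>i=1..n. \<Sum>j=i..n. \<Sum>l\<in>L. c l * (a i j * (w l i * z j + z i * w l j)))"
    unfolding Bq_formula
    by (intro sum.cong refl) (simp add: sum_distrib_left sum_distrib_right sum.distrib[symmetric] algebra_simps)
  also have "\<dots> = (\<Sum>i=1..n. \<Sum>l\<in>L. \<Sum>j=i..n. c l * (a i j * (w l i * z j + z i * w l j)))"
    by (intro sum.cong refl) (rule sum.swap)
  also have "\<dots> = (\<Sum>l\<in>L. \<Sum>i=1..n. \<Sum>j=i..n. c l * (a i j * (w l i * z j + z i * w l j)))"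
    by (rule sum.swap)
  also have "\<dots> = (\<Sum>l\<in>L. c l * Bq n a (w l) z)"
    unfolding Bq_formula by (simp add: sum_distrib_left)
  finally show ?thesis .
qed

definition delta :: "nat \<Rightarrow> nat \<Rightarrow> 'a::field" where
  "delta p = (\<lambda>k. if k = p then 1 else 0)"

lemma Bq_basis: "Bq n a x z = (\<Sum>p\<in>{1..n}. x p * Bq n a (delta p) z)"
  by (rule Bq_lincomb) (auto simp: delta_def if_distrib cong: if_cong)

section \<open>Linear dependence\<close>

lemma dep_nontriv:
  fixes u :: "nat \<Rightarrow> nat \<Rightarrow> 'a::field"
  shows "finite J \<Longrightarrow> m < card J \<Longrightarrow>
    \<exists>c. (\<exists>x\<in>J. c x \<noteq> 0) \<and> (\<forall>k\<in>{1..m}. (\<Sum>l\<in>J. c l * u l k) = 0)"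
proof (induction m arbitrary: J u)
  case 0
  then obtain x where "x \<in> J" by fastforce
  then show ?case by (intro exI[of _ "\<lambda>_. 1"]) auto
next
  case (Suc m)
  show ?case
  proof (cases "\<forall>l\<in>J. u l (Suc m) = 0")
    case True
    obtain c where c: "\<exists>x\<in>J. c x \<noteq> 0" "\<forall>k\<in>{1..m}. (\<Sum>l\<in>J. c l * u l k) = 0"
      using Suc.IH[of J u] Suc.prems by auto
    have "(\<Sum>l\<in>J. c l * u l k) = 0" if "k \<in> {1..Suc m}" for k
    proof (cases "k = Suc m")
      case True then show ?thesis using \<open>\<forall>l\<in>J. u l (Suc m) = 0\<close> by simp
    next
      case False then show ?thesis using c that by auto
    qed
    then show ?thesis using c by blast
  next
    case False
    then obtain p where pJ: "p \<in> J" and up: "u p (Suc m) \<noteq> 0" by auto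
    define J' where "J' = J - {p}"
    define u' where "u' = (\<lambda>l k. u l k - (u l (Suc m) / u p (Suc m)) * u p k)"
    have fJ': "finite J'" using Suc.prems by (simp add: J'_def)
    have cJ': "m < card J'" using Suc.prems pJ by (simp add: J'_def)
    obtain c' where c': "\<exists>x\<in>J'. c' x \<noteq> 0" "\<forall>k\<in>{1..m}. (\<Sum>l\<in>J'. c' l * u' l k) = 0"
      using Suc.IH[OF fJ' cJ', of u'] by auto
    have c'all: "(\<Sum>l\<in>J'. c' l * u' l k) = 0" if "k \<in> {1..Suc m}" for k
    proof (cases "k = Suc m")
      case True then show ?thesis using up by (simp add: u'_def)
    next
      case False then show ?thesis using c' that by auto
    qed
    define c where "c = c'(p := - (\<Sum>l\<in>J'. c' l * u l (Suc m)) / u p (Suc m))"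
    have key: "(\<Sum>l\<in>J. c l * u l k) = (\<Sum>l\<in>J'. c' l * u' l k)" for k
    proof -
      have "(\<Sum>l\<in>J. c l * u l k) = c p * u p k + (\<Sum>l\<in>J'. c l * u l k)"
        unfolding J'_def using pJ Suc.prems by (simp add: sum.remove)
      also have "(\<Sum>l\<in>J'. c l * u l k) = (\<Sum>l\<in>J'. c' l * u l k)"
        by (intro sum.cong) (auto simp: c_def J'_def)
      also have "(\<Sum>l\<in>J'. c' l * u' l k) = (\<Sum>l\<in>J'. c' l * u l k) -
          (\<Sum>l\<in>J'. c' l * u l (Suc m)) / u p (Suc m) * u p k"
      proof -
        have "(\<Sum>l\<in>J'. c' l * u' l k) = (\<Sum>l\<in>J'. c' l * u l k - (c' l * u l (Suc m) / u p (Suc m)) * u p k)"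
          by (intro sum.cong) (simp_all add: u'_def algebra_simps)
        also have "\<dots> = (\<Sum>l\<in>J'. c' l * u l k) - (\<Sum>l\<in>J'. c' l * u l (Suc m) / u p (Suc m)) * u p k"
          by (simp add: sum_subtractf sum_distrib_right)
        finally show ?thesis by (simp add: sum_divide_distrib)
      qed
      ultimately show ?thesis by (simp add: c_def)
    qed
    have "\<exists>x\<in>J. c x \<noteq> 0" using c'(1) by (auto simp: c_def J'_def)
    moreover have "\<forall>k\<in>{1..Suc m}. (\<Sum>l\<in>J. c l * u l k) = 0" using key c'all by simp
    ultimately show ?thesis by blast
  qed
qed

lemma dep:
  fixes u :: "nat \<Rightarrow> nat \<Rightarrow> 'a::field"
  assumes "finite J" "m < card J"
  shows "\<exists>i0\<in>J. \<exists>c. \<forall>k\<in>{1..m}. u i0 k = (\<Sum>l\<in>J - {i0}. c l * u l k)"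
proof -
  obtain c x where x: "x \<in> J" "c x \<noteq> 0" and c: "\<forall>k\<in>{1..m}. (\<Sum>l\<in>J. c l * u l k) = 0"
    using dep_nontriv[OF assms, of u] by auto
  have "u x k = (\<Sum>l\<in>J - {x}. (- c l / c x) * u l k)" if "k \<in> {1..m}" for k
  proof -
    have "c x * u x k + (\<Sum>l\<in>J - {x}. c l * u l k) = 0"
      using c that x assms(1) by (simp add: sum.remove)
    then have "u x k = - (\<Sum>l\<in>J - {x}. c l * u l k) / c x"
      using x(2) by (simp add: field_simps eq_neg_iff_add_eq_0 add.commute)
    then show ?thesis by (simp add: sum_divide_distrib sum_negf)
  qed
  then show ?thesis using x by (intro bexI[OF _ x(1)] exI[of _ "\<lambda>l. - c l / c x"]) auto
qed



definition gram :: "nat \<Rightarrow> (nat \<Rightarrow> nat \<Rightarrow> 'a::field) \<Rightarrow> (nat \<Rightarrow> nat \<Rightarrow> 'a) \<Rightarrow> nat \<Rightarrow> nat \<Rightarrow> 'a" where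
  "gram m b u = (\<lambda>x y. Bq m b (u x) (u y))"

lemma gram_sym: "gram m b u x y = gram m b u y x"
  unfolding gram_def by (rule Bq_sym)

lemma pf_expand_gram:
  "finite K \<Longrightarrow> i \<in> K \<Longrightarrow> pf (gram m b u) K = (\<Sum>j\<in>K - {i}. gram m b u i j * pf (gram m b u) (K - {i, j}))"
  by (rule pf_expand) (auto simp: gram_sym)

lemma subst_row:
  assumes "finite K" "i0 \<in> K"
  shows "(\<Sum>j\<in>K - {i0}. Bq m b (u l) (u j) * pf (gram m b u) (K - {i0, j})) = pf (gram m b (u(i0 := u l))) K"
proof -
  have "pf (gram m b (u(i0 := u l))) K =
      (\<Sum>j\<in>K - {i0}. gram m b (u(i0 := u l)) i0 j * pf (gram m b (u(i0 := u l))) (K - {i0, j}))"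
    by (rule pf_expand_gram[OF assms])
  also have "\<dots> = (\<Sum>j\<in>K - {i0}. Bq m b (u l) (u j) * pf (gram m b u) (K - {i0, j}))"
  proof (rule sum.cong)
    fix j assume j: "j \<in> K - {i0}"
    have "pf (gram m b (u(i0 := u l))) (K - {i0, j}) = pf (gram m b u) (K - {i0, j})"
      by (rule pf_cong) (use assms in \<open>auto simp: gram_def\<close>)
    then show "gram m b (u(i0 := u l)) i0 j * pf (gram m b (u(i0 := u l))) (K - {i0, j}) =
        Bq m b (u l) (u j) * pf (gram m b u) (K - {i0, j})"
      using j by (simp add: gram_def)
  qed simp
  finally show ?thesis by simp
qed

lemma expand_dep:
  assumes "finite K" "i0 \<in> K" "finite L" "\<And>k. k \<in> {1..m} \<Longrightarrow> u i0 k = (\<Sum>l\<in>L. c l * u l k)"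
  shows "pf (gram m b u) K = (\<Sum>l\<in>L. c l * pf (gram m b (u(i0 := u l))) K)"
proof -
  have "pf (gram m b u) K = (\<Sum>j\<in>K - {i0}. gram m b u i0 j * pf (gram m b u) (K - {i0, j}))"
    by (rule pf_expand_gram[OF assms(1,2)])
  also have "\<dots> = (\<Sum>j\<in>K - {i0}. \<Sum>l\<in>L. c l * (Bq m b (u l) (u j) * pf (gram m b u) (K - {i0, j})))"
  proof (rule sum.cong)
    fix j
    have "gram m b u i0 j = (\<Sum>l\<in>L. c l * Bq m b (u l) (u j))"
      unfolding gram_def by (rule Bq_lincomb[OF assms(3,4)])
    then show "gram m b u i0 j * pf (gram m b u) (K - {i0, j}) =
        (\<Sum>l\<in>L. c l * (Bq m b (u l) (u j) * pf (gram m b u) (K - {i0, j})))"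
      by (simp add: sum_distrib_right mult.assoc)
  qed simp
  also have "\<dots> = (\<Sum>l\<in>L. \<Sum>j\<in>K - {i0}. c l * (Bq m b (u l) (u j) * pf (gram m b u) (K - {i0, j})))"
    by (rule sum.swap)
  also have "\<dots> = (\<Sum>l\<in>L. c l * pf (gram m b (u(i0 := u l))) K)"
    by (simp add: sum_distrib_left[symmetric] subst_row[OF assms(1,2)])
  finally show ?thesis .
qed

lemma pf_alt_gram:
  assumes ch: "CHAR('a::field) = 2" and "finite K" "i0 \<in> K" "l \<in> K" "l \<noteq> i0"
  shows "pf (gram m (b :: nat \<Rightarrow> nat \<Rightarrow> 'a) (u(i0 := u l))) K = 0"
  by (rule pf_alt[OF ch assms(2,3,4) assms(5)[symmetric]])
    (use assms in \<open>auto simp: gram_def Bq_diag[OF ch] intro: Bq_sym\<close>)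

lemma pf_dep_zero:
  assumes ch: "CHAR('a::field) = 2" and fin: "finite J" and card: "m < card J"
  shows "pf (gram m (b :: nat \<Rightarrow> nat \<Rightarrow> 'a) u) J = 0"
proof -
  obtain i0 c where i0: "i0 \<in> J" and c: "\<forall>k\<in>{1..m}. u i0 k = (\<Sum>l\<in>J - {i0}. c l * u l k)"
    using dep[OF fin card, of u] by blast
  have "pf (gram m b u) J = (\<Sum>l\<in>J - {i0}. c l * pf (gram m b (u(i0 := u l))) J)"
    by (rule expand_dep[OF fin i0]) (use fin c in auto)
  also have "\<dots> = 0"
    by (rule sum.neutral) (use pf_alt_gram[OF ch fin i0] in auto)
  finally show ?thesis .
qed

lemma W_dep_zero:
  assumes ch: "CHAR('a::field) = 2" and fin: "finite J" and card: "m < card J" and k: "k \<in> {1..m}"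
  shows "(\<Sum>t\<in>J. pf (gram m (b :: nat \<Rightarrow> nat \<Rightarrow> 'a) u) (J - {t}) * u t k) = 0"
proof -
  obtain i0 c where i0: "i0 \<in> J" and c: "\<forall>k\<in>{1..m}. u i0 k = (\<Sum>l\<in>J - {i0}. c l * u l k)"
    using dep[OF fin card, of u] by blast
  define P where "P t = pf (gram m b u) (J - {t})" for t
  have Pt: "P t = c t * P i0" if t: "t \<in> J - {i0}" for t
  proof -
    have "P t = (\<Sum>l\<in>J - {i0}. c l * pf (gram m b (u(i0 := u l))) (J - {t}))"
      unfolding P_def by (rule expand_dep) (use fin c t i0 in auto)
    also have "\<dots> = (\<Sum>l\<in>J - {i0}. if l = t then c t * P i0 else 0)"
    proof (rule sum.cong)
      fix l assume l: "l \<in> J - {i0}"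
      show "c l * pf (gram m b (u(i0 := u l))) (J - {t}) = (if l = t then c t * P i0 else 0)"
      proof (cases "l = t")
        case True
        define h where "h x = (if x = t then i0 else x)" for x
        have img: "h ` (J - {i0}) = J - {t}" using t i0 by (auto simp: h_def image_iff)
        have inj: "inj_on h (J - {i0})" using t by (auto simp: h_def inj_on_def)
        have "pf (gram m b (u(i0 := u t))) (h ` (J - {i0})) = pf (gram m b u) (J - {i0})"
          by (rule pf_relabel) (use fin inj t in \<open>auto simp: h_def gram_def intro: Bq_sym\<close>)
        then show ?thesis using True img by (simp add: P_def)
      next
        case False
        then show ?thesis
          using pf_alt_gram[OF ch, of "J - {t}" i0 l m b u] fin i0 l t by auto
      qed
    qed simp
    also have "\<dots> = c t * P i0" using t fin by simp
    finally show ?thesis .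
  qed
  have "(\<Sum>t\<in>J. P t * u t k) = P i0 * u i0 k + (\<Sum>t\<in>J - {i0}. P t * u t k)"
    using fin i0 by (simp add: sum.remove)
  also have "(\<Sum>t\<in>J - {i0}. P t * u t k) = P i0 * (\<Sum>t\<in>J - {i0}. c t * u t k)"
    using Pt by (simp add: sum_distrib_left mult.assoc mult.left_commute)
  also have "(\<Sum>t\<in>J - {i0}. c t * u t k) = u i0 k" using c k by simp
  finally have "(\<Sum>t\<in>J. P t * u t k) = P i0 * u i0 k + P i0 * u i0 k" .
  then show ?thesis using char2_double[OF ch] by (simp add: P_def)
qed



section \<open>Homogeneous polynomial functions\<close>

definition qmono :: "nat \<Rightarrow> ((nat \<times> nat) \<Rightarrow> nat) \<Rightarrow> (nat \<Rightarrow> nat \<Rightarrow> 'a::field) \<Rightarrow> 'a" where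
  "qmono n e a = (\<Prod>v\<in>qvars n. a (fst v) (snd v) ^ e v)"

definition HP :: "nat \<Rightarrow> nat \<Rightarrow> ((nat \<Rightarrow> nat \<Rightarrow> 'a::field) \<Rightarrow> 'a) \<Rightarrow> bool" where
  "HP n d f \<longleftrightarrow> (\<exists>p. homog_poly n d p \<and> (\<forall>a. f a = eval_homog n d p a))"

lemma finite_qvars: "finite (qvars n)"
proof -
  have "qvars n \<subseteq> {1..n} \<times> {1..n}" by (auto simp: qvars_def)
  then show ?thesis by (rule finite_subset) simp
qed

lemma finite_hmonos: "finite (hmonos n d)"
proof -
  have sub: "(\<lambda>e. restrict e (qvars n)) ` hmonos n d \<subseteq> PiE (qvars n) (\<lambda>_. {..d})"
  proof
    fix r assume "r \<in> (\<lambda>e. restrict e (qvars n)) ` hmonos n d"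
    then obtain e where e: "e \<in> hmonos n d" and r: "r = restrict e (qvars n)" by auto
    have "e v \<le> d" if "v \<in> qvars n" for v
    proof -
      have "e v \<le> (\<Sum>w\<in>qvars n. e w)"
        using that finite_qvars by (intro member_le_sum) auto
      then show ?thesis using e by (simp add: hmonos_def)
    qed
    then show "r \<in> PiE (qvars n) (\<lambda>_. {..d})" unfolding r by (simp add: restrict_PiE_iff)
  qed
  have inj: "inj_on (\<lambda>e. restrict e (qvars n)) (hmonos n d)"
  proof (rule inj_onI)
    fix e1 e2 assume "e1 \<in> hmonos n d" "e2 \<in> hmonos n d" "restrict e1 (qvars n) = restrict e2 (qvars n)"
    note h = this
    show "e1 = e2"
    proof (rule ext)
      fix v
      show "e1 v = e2 v"
      proof (cases "v \<in> qvars n")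
        case True
        have "restrict e1 (qvars n) v = restrict e2 (qvars n) v" using h(3) by simp
        then show ?thesis using True by simp
      next
        case False
        then show ?thesis using h(1,2) by (cases v) (auto simp: hmonos_def)
      qed
    qed
  qed
  have "finite (PiE (qvars n) (\<lambda>_::nat\<times>nat. {..d}))" using finite_qvars by (intro finite_PiE) auto
  then have "finite ((\<lambda>e. restrict e (qvars n)) ` hmonos n d)" using sub finite_subset by blast
  then show ?thesis using inj finite_imageD by blast
qed

lemma eval_homog_mono: "eval_homog n d p a = (\<Sum>e\<in>hmonos n d. p e * qmono n e a)"
  by (simp add: eval_homog_def qmono_def)

lemma HP_mono:
  assumes "e \<in> hmonos n d"
  shows "HP n d (\<lambda>a. c * qmono n e a)"
  unfolding HP_def
proof (intro exI conjI allI)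
  show "homog_poly n d (\<lambda>e'. if e' = e then c else 0)"
    using assms by (auto simp: homog_poly_def split: if_splits)
  fix a
  have "eval_homog n d (\<lambda>e'. if e' = e then c else 0) a =
      (\<Sum>e'\<in>hmonos n d. if e' = e then c * qmono n e a else 0)"
    unfolding eval_homog_mono by (intro sum.cong) auto
  also have "\<dots> = c * qmono n e a" using assms finite_hmonos by simp
  finally show "c * qmono n e a = eval_homog n d (\<lambda>e'. if e' = e then c else 0) a" by simp
qed

lemma HP_zero: "HP n d (\<lambda>a. 0)"
  unfolding HP_def by (intro exI[of _ "\<lambda>_. 0"]) (auto simp: homog_poly_def eval_homog_def)

lemma HP_add:
  assumes "HP n d f" "HP n d g"
  shows "HP n d (\<lambda>a. f a + g a)"
proof -
  obtain p q where p: "homog_poly n d p" "\<forall>a. f a = eval_homog n d p a"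
    and q: "homog_poly n d q" "\<forall>a. g a = eval_homog n d q a"
    using assms unfolding HP_def by blast
  show ?thesis unfolding HP_def
  proof (intro exI[of _ "\<lambda>e. p e + q e"] conjI allI)
    show "homog_poly n d (\<lambda>e. p e + q e)"
      using p(1) q(1) unfolding homog_poly_def by (metis add.right_neutral add.left_neutral)
    show "f a + g a = eval_homog n d (\<lambda>e. p e + q e) a" for a
      using p(2) q(2) by (simp add: eval_homog_def sum.distrib distrib_right)
  qed
qed

lemma HP_scale:
  assumes "HP n d f"
  shows "HP n d (\<lambda>a. c * f a)"
proof -
  obtain p where p: "homog_poly n d p" "\<forall>a. f a = eval_homog n d p a"
    using assms unfolding HP_def by blast
  show ?thesis unfolding HP_def
  proof (intro exI[of _ "\<lambda>e. c * p e"] conjI allI)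
    show "homog_poly n d (\<lambda>e. c * p e)"
      using p(1) unfolding homog_poly_def by auto
    show "c * f a = eval_homog n d (\<lambda>e. c * p e) a" for a
      using p(2) by (simp add: eval_homog_def sum_distrib_left mult.assoc)
  qed
qed

lemma HP_sum:
  assumes "finite S" "\<And>s. s \<in> S \<Longrightarrow> HP n d (f s)"
  shows "HP n d (\<lambda>a. \<Sum>s\<in>S. f s a)"
  using assms
proof (induction S rule: finite_induct)
  case empty then show ?case by (simp add: HP_zero)
next
  case (insert x F)
  then show ?case by (simp add: HP_add)
qed

lemma HP_cong: "HP n d f \<Longrightarrow> (\<And>a. f a = g a) \<Longrightarrow> d = d' \<Longrightarrow> HP n d' g"
proof -
  assume "HP n d f" "\<And>a. f a = g a" "d = d'"
  moreover have "f = g" using \<open>\<And>a. f a = g a\<close> by auto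
  ultimately show ?thesis by simp
qed

lemma qmono_add: "qmono n e1 a * qmono n e2 a = qmono n (\<lambda>v. e1 v + e2 v) a"
  unfolding qmono_def by (simp add: prod.distrib power_add)

lemma hmonos_add: "e1 \<in> hmonos n d1 \<Longrightarrow> e2 \<in> hmonos n d2 \<Longrightarrow> (\<lambda>v. e1 v + e2 v) \<in> hmonos n (d1 + d2)"
  unfolding hmonos_def by (simp add: sum.distrib)

lemma HP_mult:
  assumes "HP n d1 f" "HP n d2 g"
  shows "HP n (d1 + d2) (\<lambda>a. f a * g a)"
proof -
  obtain p where p: "homog_poly n d1 p" "\<forall>a. f a = eval_homog n d1 p a"
    using assms unfolding HP_def by blast
  obtain q where q: "homog_poly n d2 q" "\<forall>a. g a = eval_homog n d2 q a"
    using assms unfolding HP_def by blast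
  have eq: "f a * g a = (\<Sum>e1\<in>hmonos n d1. \<Sum>e2\<in>hmonos n d2. (p e1 * q e2) * qmono n (\<lambda>v. e1 v + e2 v) a)" for a
  proof -
    have "f a * g a = (\<Sum>e1\<in>hmonos n d1. \<Sum>e2\<in>hmonos n d2. (p e1 * qmono n e1 a) * (q e2 * qmono n e2 a))"
      using p(2) q(2) unfolding eval_homog_mono by (simp only: sum_product)
    also have "\<dots> = (\<Sum>e1\<in>hmonos n d1. \<Sum>e2\<in>hmonos n d2. (p e1 * q e2) * qmono n (\<lambda>v. e1 v + e2 v) a)"
      by (intro sum.cong refl) (simp only: qmono_add[symmetric] mult_ac)
    finally show ?thesis .
  qed
  have "HP n (d1 + d2) (\<lambda>a. \<Sum>e1\<in>hmonos n d1. \<Sum>e2\<in>hmonos n d2. (p e1 * q e2) * qmono n (\<lambda>v. e1 v + e2 v) a)"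
    by (rule HP_sum[OF finite_hmonos], rule HP_sum[OF finite_hmonos], rule HP_mono, rule hmonos_add) auto
  then show ?thesis by (rule HP_cong) (simp_all add: eq)
qed

lemma HP_const: "HP n 0 (\<lambda>a. c)"
proof -
  have "(\<lambda>_. 0) \<in> hmonos n 0" by (simp add: hmonos_def)
  from HP_mono[OF this, of c] show ?thesis by (rule HP_cong) (simp_all add: qmono_def)
qed

lemma HP_var:
  assumes "(i, j) \<in> qvars n"
  shows "HP n 1 (\<lambda>a::nat\<Rightarrow>nat\<Rightarrow>'a::field. a i j)"
proof -
  define e where "e = (\<lambda>v. if v = (i, j) then 1 else (0::nat))"
  have "e \<in> hmonos n 1" using assms finite_qvars by (simp add: hmonos_def e_def)
  from HP_mono[OF this, of "1::'a"] show ?thesis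
  proof (rule HP_cong)
    fix a
    have "qmono n e a = (\<Prod>v\<in>qvars n. if v = (i, j) then a (fst v) (snd v) else 1)"
      unfolding qmono_def e_def by (intro prod.cong) auto
    also have "\<dots> = a i j" using assms finite_qvars by simp
    finally show "1 * qmono n e a = a i j" by simp
  qed simp
qed

lemma HP_power: "HP n d f \<Longrightarrow> HP n (k * d) (\<lambda>a. f a ^ k)"
proof (induction k)
  case 0 then show ?case using HP_const[of n 1] by simp
next
  case (Suc k)
  from HP_mult[OF Suc.prems Suc.IH[OF Suc.prems]] show ?case
    by (rule HP_cong) auto
qed

lemma HP_qform: "HP n 1 (\<lambda>a. qform n a x)"
  unfolding qform_def
proof (intro HP_sum)
  fix i j assume "i \<in> {1..n}" "j \<in> {i..n}"
  then have "(i, j) \<in> qvars n" by (auto simp: qvars_def)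
  from HP_scale[OF HP_var[OF this], of "x i * x j"] show "HP n 1 (\<lambda>a. a i j * x i * x j)"
    by (rule HP_cong) auto
qed auto

lemma HP_Bq: "HP n 1 (\<lambda>a. Bq n a x y)"
  unfolding Bq_formula
proof (intro HP_sum)
  fix i j assume "i \<in> {1..n}" "j \<in> {i..n}"
  then have "(i, j) \<in> qvars n" by (auto simp: qvars_def)
  from HP_scale[OF HP_var[OF this], of "x i * y j + y i * x j"]
  show "HP n 1 (\<lambda>a. a i j * (x i * y j + y i * x j))"
    by (rule HP_cong) auto
qed auto

lemma HP_pf:
  assumes "finite J"
  shows "HP n (card J div 2) (\<lambda>a. pf (gram n a v) J)"
  using assms
proof (induction "card J" arbitrary: J rule: less_induct)
  case less
  show ?case
  proof (cases "J = {}")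
    case True then show ?thesis using HP_const[of n 1] by simp
  next
    case False
    define m where "m = Min J"
    have mJ: "m \<in> J" using False less.prems unfolding m_def by simp
    have "HP n (card J div 2) (\<lambda>a. \<Sum>j\<in>J - {m}. gram n a v m j * pf (gram n a v) (J - {m, j}))"
    proof (intro HP_sum)
      fix j assume j: "j \<in> J - {m}"
      have c: "card (J - {m, j}) = card J - 2" using card_minus2[OF less.prems mJ, of j] j by auto
      have c2: "card J \<ge> 2"
      proof -
        have "{m, j} \<subseteq> J" using mJ j by auto
        then have "card {m, j} \<le> card J" using less.prems card_mono by blast
        then show ?thesis using j by auto
      qed
      have "HP n (card (J - {m, j}) div 2) (\<lambda>a. pf (gram n a v) (J - {m, j}))"
      proof (rule less.hyps)
        show "card (J - {m, j}) < card J" using less.prems mJ j by (intro psubset_card_mono) auto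
      qed (use less.prems in auto)
      from HP_mult[OF HP_Bq this, of "v m" "v j"]
      show "HP n (card J div 2) (\<lambda>a. gram n a v m j * pf (gram n a v) (J - {m, j}))"
      proof (rule HP_cong)
        show "1 + card (J - {m, j}) div 2 = card J div 2" using c c2
          by (metis add_2_eq_Suc' div2_Suc_Suc le_add_diff_inverse2 plus_1_eq_Suc)
      qed (simp add: gram_def)
    qed (use less.prems in auto)
    then show ?thesis
    proof (rule HP_cong)
      fix a
      show "(\<Sum>j\<in>J - {m}. gram n a v m j * pf (gram n a v) (J - {m, j})) = pf (gram n a v) J"
        unfolding m_def by (rule pf_rec[symmetric, OF less.prems False])
    qed simp
  qed
qed



lemma Bq_add2: "Bq n a x (\<lambda>k. y k + z k) = Bq n a x y + Bq n a x z"
  unfolding Bq_formula by (simp add: sum.distrib[symmetric] algebra_simps)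

lemma Bq_smult2: "Bq n a x (\<lambda>k. c * y k) = c * Bq n a x y"
  unfolding Bq_formula by (simp add: sum_distrib_left algebra_simps)

lemma Bq_zero: "Bq n a (\<lambda>k. 0) z = 0"
  unfolding Bq_formula by simp

lemma Bq_sum1:
  assumes "finite L"
  shows "Bq n a (\<lambda>k. \<Sum>l\<in>L. w l k) z = (\<Sum>l\<in>L. Bq n a (w l) z)"
  using Bq_lincomb[OF assms, of n "\<lambda>k. \<Sum>l\<in>L. w l k" "\<lambda>_. 1" w a z] by simp

lemma qform_sum_orth:
  assumes "finite L" "\<And>i j. i \<in> L \<Longrightarrow> j \<in> L \<Longrightarrow> i \<noteq> j \<Longrightarrow> Bq n a (w i) (w j) = 0"
  shows "qform n a (\<lambda>k. \<Sum>l\<in>L. w l k) = (\<Sum>l\<in>L. qform n a (w l))"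
  using assms
proof (induction L rule: finite_induct)
  case empty then show ?case by (simp add: qform_zero)
next
  case (insert x F)
  have "qform n a (\<lambda>k. \<Sum>l\<in>insert x F. w l k) = qform n a (\<lambda>k. w x k + (\<Sum>l\<in>F. w l k))"
    using insert by simp
  also have "\<dots> = qform n a (w x) + qform n a (\<lambda>k. \<Sum>l\<in>F. w l k) + Bq n a (w x) (\<lambda>k. \<Sum>l\<in>F. w l k)"
    by (rule qform_add)
  also have "Bq n a (w x) (\<lambda>k. \<Sum>l\<in>F. w l k) = (\<Sum>l\<in>F. Bq n a (w l) (w x))"
    by (subst Bq_sym) (rule Bq_sum1[OF insert(1)])
  also have "\<dots> = 0" using insert.prems insert.hyps by (intro sum.neutral) auto
  also have "qform n a (\<lambda>k. \<Sum>l\<in>F. w l k) = (\<Sum>l\<in>F. qform n a (w l))"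
    using insert by auto
  finally show ?case using insert by simp
qed

lemma char2_sq_add: "CHAR('a::comm_ring_1) = 2 \<Longrightarrow> ((x::'a) + y) ^ 2 = x ^ 2 + y ^ 2"
  using char2_double[of "x * y"] by (simp add: power2_eq_square algebra_simps)

lemma char2_sq_sum:
  assumes "CHAR('a::comm_ring_1) = 2" "finite L"
  shows "(\<Sum>l\<in>L. (t l :: 'a)) ^ 2 = (\<Sum>l\<in>L. t l ^ 2)"
  using assms(2) by (induction L rule: finite_induct) (auto simp: char2_sq_add[OF assms(1)])

lemma char2_sqrt:
  assumes "CHAR('a::{field,finite}) = 2"
  shows "\<exists>r::'a. r ^ 2 = c"
proof -
  have "inj (\<lambda>x::'a. x ^ 2)"
  proof (rule injI)
    fix x y :: 'a assume "x ^ 2 = y ^ 2"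
    then have "(x + y) ^ 2 = 0" using char2_sq_add[OF assms, of x y] char2_double[OF assms, of "y^2"] by simp
    then have "x + y = 0" by simp
    then have "x = - y" by (simp add: eq_neg_iff_add_eq_0)
    then show "x = y" using uminus_CHAR_2[OF assms] by simp
  qed
  then have "surj (\<lambda>x::'a. x ^ 2)" by (rule finite_UNIV_inj_surj[OF finite_UNIV])
  then show ?thesis by (metis surjD)
qed

section \<open>Symplectic families\<close>

definition sympl :: "nat \<Rightarrow> (nat \<Rightarrow> nat \<Rightarrow> 'a::field) \<Rightarrow> nat \<Rightarrow> (nat \<Rightarrow> nat \<Rightarrow> 'a) \<Rightarrow> (nat \<Rightarrow> nat \<Rightarrow> 'a) \<Rightarrow> bool" where
  "sympl n a s e f \<longleftrightarrow> (\<forall>i<s. \<forall>j<s. Bq n a (e i) (f j) = (if i = j then 1 else 0) \<and>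
      Bq n a (e i) (e j) = 0 \<and> Bq n a (f i) (f j) = 0)"

definition proj :: "nat \<Rightarrow> (nat \<Rightarrow> nat \<Rightarrow> 'a::field) \<Rightarrow> nat \<Rightarrow> (nat \<Rightarrow> nat \<Rightarrow> 'a) \<Rightarrow> (nat \<Rightarrow> nat \<Rightarrow> 'a) \<Rightarrow> (nat \<Rightarrow> 'a) \<Rightarrow> nat \<Rightarrow> 'a" where
  "proj n a s e f x = (\<lambda>k. x k - (\<Sum>i<s. Bq n a x (f i) * e i k + Bq n a x (e i) * f i k))"

lemma Bq_blk: "Bq n a (\<lambda>k. c * u k + d * w k) z = c * Bq n a u z + d * Bq n a w z"
  using Bq_add[of n a "\<lambda>k. c * u k" "\<lambda>k. d * w k" z] by (simp add: Bq_smult)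

lemma Bq_proj:
  "Bq n a (proj n a s e f x) z = Bq n a x z - (\<Sum>i<s. Bq n a x (f i) * Bq n a (e i) z + Bq n a x (e i) * Bq n a (f i) z)"
  unfolding proj_def by (simp add: Bq_diff Bq_sum1 Bq_blk)

lemma proj_orth:
  assumes "sympl n a s e f" "j < s"
  shows "Bq n a (proj n a s e f x) (e j) = 0" "Bq n a (proj n a s e f x) (f j) = 0"
proof -
  have "(\<Sum>i<s. Bq n a x (f i) * Bq n a (e i) (e j) + Bq n a x (e i) * Bq n a (f i) (e j)) =
      (\<Sum>i<s. if i = j then Bq n a x (e j) else 0)"
  proof (rule sum.cong)
    fix i assume "i \<in> {..<s}"
    then show "Bq n a x (f i) * Bq n a (e i) (e j) + Bq n a x (e i) * Bq n a (f i) (e j) =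
        (if i = j then Bq n a x (e j) else 0)"
      using assms Bq_sym[of n a "f i" "e j"] unfolding sympl_def by auto
  qed simp
  then show "Bq n a (proj n a s e f x) (e j) = 0" using assms(2) by (simp add: Bq_proj)
  have "(\<Sum>i<s. Bq n a x (f i) * Bq n a (e i) (f j) + Bq n a x (e i) * Bq n a (f i) (f j)) =
      (\<Sum>i<s. if i = j then Bq n a x (f j) else 0)"
  proof (rule sum.cong)
    fix i assume "i \<in> {..<s}"
    then show "Bq n a x (f i) * Bq n a (e i) (f j) + Bq n a x (e i) * Bq n a (f i) (f j) =
        (if i = j then Bq n a x (f j) else 0)"
      using assms unfolding sympl_def by auto
  qed simp
  then show "Bq n a (proj n a s e f x) (f j) = 0" using assms(2) by (simp add: Bq_proj)
qed

lemma symp_exists: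
  fixes a :: "nat \<Rightarrow> nat \<Rightarrow> 'a::field"
  assumes ch: "CHAR('a) = 2"
  shows "(\<exists>e f. sympl n a s e f) \<or>
    (\<exists>s'<s. \<exists>e f. sympl n a s' e f \<and> (\<forall>x y. Bq n a (proj n a s' e f x) (proj n a s' e f y) = 0))"
proof (induction s)
  case 0
  have "sympl n a 0 e f" for e f by (simp add: sympl_def)
  then show ?case by blast
next
  case (Suc s)
  show ?case
  proof (cases "\<exists>s'<s. \<exists>e f. sympl n a s' e f \<and> (\<forall>x y. Bq n a (proj n a s' e f x) (proj n a s' e f y) = 0)")
    case True
    then show ?thesis using less_SucI by blast
  next
    case False
    with Suc.IH obtain e f where ef: "sympl n a s e f" by blast
    show ?thesis
    proof (cases "\<forall>x y. Bq n a (proj n a s e f x) (proj n a s e f y) = 0")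
      case True then show ?thesis using ef by blast
    next
      case False
      then obtain x y where c: "Bq n a (proj n a s e f x) (proj n a s e f y) \<noteq> 0" by blast
      define c where "c = Bq n a (proj n a s e f x) (proj n a s e f y)"
      define x' where "x' = proj n a s e f x"
      define y' where "y' = (\<lambda>k. inverse c * proj n a s e f y k)"
      have c0: "c \<noteq> 0" using c by (simp add: c_def)
      have ox: "Bq n a x' (e j) = 0" "Bq n a x' (f j) = 0" if "j < s" for j
        using proj_orth[OF ef that] by (simp_all add: x'_def)
      have oy: "Bq n a y' (e j) = 0" "Bq n a y' (f j) = 0" if "j < s" for j
        using proj_orth[OF ef that] by (simp_all add: y'_def Bq_smult)
      have xy: "Bq n a x' y' = 1" using c0 by (simp add: x'_def y'_def Bq_smult2 c_def[symmetric])
      have "sympl n a (Suc s) (e(s := x')) (f(s := y'))"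
        unfolding sympl_def
      proof (intro allI impI)
        fix i j assume i: "i < Suc s" and j: "j < Suc s"
        show "Bq n a ((e(s := x')) i) ((f(s := y')) j) = (if i = j then 1 else 0) \<and>
          Bq n a ((e(s := x')) i) ((e(s := x')) j) = 0 \<and> Bq n a ((f(s := y')) i) ((f(s := y')) j) = 0"
        proof (cases "i = s"; cases "j = s")
          assume "i = s" "j = s"
          then show ?thesis using xy by (simp add: Bq_diag[OF ch])
        next
          assume "i = s" "j \<noteq> s"
          then show ?thesis using ox[of j] oy[of j] j by simp
        next
          assume "i \<noteq> s" "j = s"
          then show ?thesis using ox[of i] oy[of i] i
            by (simp add: Bq_sym[of n a "e i"] Bq_sym[of n a "f i"])
        next
          assume "i \<noteq> s" "j \<noteq> s"
          then show ?thesis using ef i j unfolding sympl_def by simp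
        qed
      qed
      then show ?thesis by blast
    qed
  qed
qed



section \<open>Decomposition along a symplectic family\<close>

lemma decomp:
  assumes sy: "sympl n a s e f"
  shows "qform n a x = (\<Sum>i<s. qform n a (e i) * (Bq n a x (f i))^2 + Bq n a x (f i) * Bq n a x (e i)
            + qform n a (f i) * (Bq n a x (e i))^2) + qform n a (proj n a s e f x)"
proof -
  define w where "w i = (\<lambda>k. Bq n a x (f i) * e i k + Bq n a x (e i) * f i k)" for i
  define h where "h = (\<lambda>k. \<Sum>i<s. w i k)"
  have xe: "x = (\<lambda>k. proj n a s e f x k + h k)"
    by (rule ext) (simp add: proj_def h_def w_def)
  have "qform n a x = qform n a (proj n a s e f x) + qform n a h + Bq n a (proj n a s e f x) h"
    by (subst xe) (rule qform_add)
  also have "Bq n a (proj n a s e f x) h = 0"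
  proof -
    have "Bq n a (proj n a s e f x) h = (\<Sum>i<s. Bq n a (w i) (proj n a s e f x))"
      unfolding h_def by (subst Bq_sym) (rule Bq_sum1, simp)
    also have "\<dots> = 0"
    proof (rule sum.neutral, intro ballI)
      fix i assume "i \<in> {..<s}"
      then show "Bq n a (w i) (proj n a s e f x) = 0"
        using proj_orth[OF sy, of i x] unfolding w_def
        by (simp add: Bq_blk Bq_sym[of n a "e i"] Bq_sym[of n a "f i"])
    qed
    finally show ?thesis .
  qed
  also have "qform n a h = (\<Sum>i<s. qform n a (w i))"
    unfolding h_def
  proof (rule qform_sum_orth)
    fix i j assume ij: "i \<in> {..<s}" "j \<in> {..<s}" "i \<noteq> j"
    have "Bq n a (e i) (w j) = 0" "Bq n a (f i) (w j) = 0"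
      using sy ij unfolding w_def sympl_def
      by (auto simp: Bq_sym[of n a "e i"] Bq_sym[of n a "f i"] Bq_blk)
    then show "Bq n a (w i) (w j) = 0" unfolding w_def by (simp add: Bq_blk)
  qed simp
  also have "\<dots> = (\<Sum>i<s. qform n a (e i) * (Bq n a x (f i))^2 + Bq n a x (f i) * Bq n a x (e i)
            + qform n a (f i) * (Bq n a x (e i))^2)"
  proof (rule sum.cong)
    fix i assume i: "i \<in> {..<s}"
    have "qform n a (w i) = qform n a (\<lambda>k. Bq n a x (f i) * e i k) + qform n a (\<lambda>k. Bq n a x (e i) * f i k)
        + Bq n a (\<lambda>k. Bq n a x (f i) * e i k) (\<lambda>k. Bq n a x (e i) * f i k)"
      unfolding w_def by (rule qform_add)
    also have "Bq n a (\<lambda>k. Bq n a x (f i) * e i k) (\<lambda>k. Bq n a x (e i) * f i k) = Bq n a x (f i) * Bq n a x (e i)"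
      using sy i unfolding sympl_def by (simp add: Bq_smult Bq_smult2)
    finally show "qform n a (w i) = qform n a (e i) * (Bq n a x (f i))^2 + Bq n a x (f i) * Bq n a x (e i)
            + qform n a (f i) * (Bq n a x (e i))^2"
      by (simp only: qform_smult) (simp add: algebra_simps)
  qed simp
  finally show ?thesis by (simp add: algebra_simps)
qed

lemma proj_add: "proj n a s e f (\<lambda>k. x k + y k) = (\<lambda>k. proj n a s e f x k + proj n a s e f y k)"
  unfolding proj_def by (rule ext) (simp add: Bq_add sum.distrib algebra_simps)

lemma proj_smult: "proj n a s e f (\<lambda>k. c * x k) = (\<lambda>k. c * proj n a s e f x k)"
  unfolding proj_def by (rule ext) (simp add: Bq_smult sum_distrib_left algebra_simps)

lemma proj_zero: "proj n a s e f (\<lambda>k. 0) = (\<lambda>k. 0)"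
  unfolding proj_def by (rule ext) (simp add: Bq_zero)

lemma proj_cong:
  assumes "\<And>k. k \<in> {1..n} \<Longrightarrow> x k = y k" "k \<in> {1..n}"
  shows "proj n a s e f x k = proj n a s e f y k"
  unfolding proj_def using assms Bq_cong[OF assms(1)] by simp

lemma rad_square:
  fixes a :: "nat \<Rightarrow> nat \<Rightarrow> 'a::{field,finite}"
  assumes ch: "CHAR('a) = 2"
    and iso: "\<And>x y. Bq n a (proj n a s e f x) (proj n a s e f y) = 0"
  shows "\<exists>r. \<forall>x. qform n a (proj n a s e f x) = (\<Sum>p=1..n. r p * x p) ^ 2"
proof -
  define Qp where "Qp x = qform n a (proj n a s e f x)" for x
  have Qp_add: "Qp (\<lambda>k. x k + y k) = Qp x + Qp y" for x y
    unfolding Qp_def proj_add qform_add iso by simp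
  have Qp_sum: "Qp (\<lambda>k. \<Sum>l\<in>L. w l k) = (\<Sum>l\<in>L. Qp (w l))" if "finite L" for L w
    using that
  proof (induction L rule: finite_induct)
    case empty then show ?case by (simp add: Qp_def proj_zero qform_zero)
  next
    case (insert x F)
    have "Qp (\<lambda>k. \<Sum>l\<in>insert x F. w l k) = Qp (\<lambda>k. w x k + (\<Sum>l\<in>F. w l k))"
      using insert by simp
    then show ?case using insert Qp_add by simp
  qed
  have Qp_smult: "Qp (\<lambda>k. c * x k) = c ^ 2 * Qp x" for c x
    unfolding Qp_def proj_smult qform_smult ..
  have Qp_cong: "Qp x = Qp y" if "\<And>k. k \<in> {1..n} \<Longrightarrow> x k = y k" for x y
    unfolding Qp_def by (rule qform_cong, rule proj_cong) (use that in auto)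
  define r where "r p = (SOME r. r ^ 2 = Qp (delta p))" for p
  have r: "r p ^ 2 = Qp (delta p)" for p
    unfolding r_def by (rule someI_ex) (rule char2_sqrt[OF ch])
  have "Qp x = (\<Sum>p=1..n. r p * x p) ^ 2" for x
  proof -
    have "Qp x = Qp (\<lambda>k. \<Sum>p=1..n. x p * delta p k)"
      by (rule Qp_cong) (auto simp: delta_def if_distrib cong: if_cong)
    also have "\<dots> = (\<Sum>p=1..n. Qp (\<lambda>k. x p * delta p k))" by (rule Qp_sum) simp
    also have "\<dots> = (\<Sum>p=1..n. (r p * x p) ^ 2)"
      by (intro sum.cong refl) (simp add: Qp_smult r power_mult_distrib)
    also have "\<dots> = (\<Sum>p=1..n. r p * x p) ^ 2" by (rule char2_sq_sum[OF ch, symmetric]) simp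
    finally show ?thesis .
  qed
  then show ?thesis unfolding Qp_def by blast
qed



section \<open>Representations with few linear forms\<close>

definition rep :: "nat \<Rightarrow> nat \<Rightarrow> ((nat \<Rightarrow> 'a::field) \<Rightarrow> 'a) \<Rightarrow> bool" where
  "rep n m F \<longleftrightarrow> (\<exists>(b :: nat \<Rightarrow> nat \<Rightarrow> 'a) (l :: nat \<Rightarrow> nat \<Rightarrow> 'a).
      \<forall>x. F x = qform m b (\<lambda>k. \<Sum>i=1..n. l k i * x i))"

definition lin :: "nat \<Rightarrow> (nat \<Rightarrow> 'a::field) \<Rightarrow> (nat \<Rightarrow> 'a) \<Rightarrow> 'a" where
  "lin n \<alpha> x = (\<Sum>i=1..n. \<alpha> i * x i)"

lemma rep_qrank: "rep n m (qform n a) \<Longrightarrow> qrank n a \<le> m"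
  unfolding rep_def qrank_def by (rule Least_le) auto

lemma rep_cong: "rep n m F \<Longrightarrow> (\<And>x. F x = G x) \<Longrightarrow> rep n m G"
  unfolding rep_def by auto

lemma rep_zero: "rep n 0 (\<lambda>x. 0)"
  unfolding rep_def qform_def by simp

lemma rep_sq: "rep n 1 (\<lambda>x. (lin n \<alpha> x) ^ 2)"
  unfolding rep_def
  by (intro exI[of _ "\<lambda>i j. 1"] exI[of _ "\<lambda>k. \<alpha>"]) (simp add: qform_def lin_def power2_eq_square)

lemma qform2: "qform 2 b y = b 1 1 * y 1 * y 1 + b 1 2 * y 1 * y 2 + b 2 2 * y 2 * y 2"
proof -
  have e1: "{Suc 0..2::nat} = {Suc 0, 2}" by auto
  have e2: "{2..2::nat} = {2}" by auto
  show ?thesis unfolding qform_def by (simp add: e1 e2)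
qed

lemma rep_blk: "rep n 2 (\<lambda>x. c1 * (lin n \<alpha> x) ^ 2 + lin n \<alpha> x * lin n \<beta> x + c2 * (lin n \<beta> x) ^ 2)"
proof -
  define b where "b i j = (if i = 1 \<and> j = 1 then c1 else if i = 1 \<and> j = 2 then 1 else if i = 2 \<and> j = 2 then c2 else 0)" for i j :: nat
  define l where "l k = (if k = 1 then \<alpha> else \<beta>)" for k :: nat
  have e1: "{1..2::nat} = {1, 2}" by auto
  have e2: "{2..2::nat} = {2}" by auto
  show ?thesis unfolding rep_def
    by (rule exI[of _ b], rule exI[of _ l], rule allI)
      (simp add: qform2 b_def l_def lin_def power2_eq_square algebra_simps)
qed

lemma rep_add:
  assumes "rep n m1 F" "rep n m2 G"
  shows "rep n (m1 + m2) (\<lambda>x. F x + G x)"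
proof -
  obtain b1 l1 where 1: "\<And>x. F x = qform m1 b1 (\<lambda>k. \<Sum>i=1..n. l1 k i * x i)"
    using assms(1) unfolding rep_def by blast
  obtain b2 l2 where 2: "\<And>x. G x = qform m2 b2 (\<lambda>k. \<Sum>i=1..n. l2 k i * x i)"
    using assms(2) unfolding rep_def by blast
  define b where "b i j = (if j \<le> m1 then b1 i j else if m1 < i then b2 (i - m1) (j - m1) else 0)" for i j
  define l where "l k = (if k \<le> m1 then l1 k else l2 (k - m1))" for k
  have "F x + G x = qform (m1 + m2) b (\<lambda>k. \<Sum>i=1..n. l k i * x i)" for x
  proof -
    define y where "y = (\<lambda>k. \<Sum>i=1..n. l k i * x i)"
    define y1 where "y1 = (\<lambda>k. \<Sum>i=1..n. l1 k i * x i)"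
    define y2 where "y2 = (\<lambda>k. \<Sum>i=1..n. l2 k i * x i)"
    have "qform (m1 + m2) b y = (\<Sum>i=1..m1. \<Sum>j=i..m1 + m2. b i j * y i * y j) +
        (\<Sum>i=m1 + 1..m1 + m2. \<Sum>j=i..m1 + m2. b i j * y i * y j)"
      unfolding qform_def by (rule sum.ub_add_nat) simp
    also have "(\<Sum>i=1..m1. \<Sum>j=i..m1 + m2. b i j * y i * y j) = (\<Sum>i=1..m1. \<Sum>j=i..m1. b1 i j * y1 i * y1 j)"
    proof (rule sum.cong[OF refl])
      fix i assume i: "i \<in> {1..m1}"
      have "(\<Sum>j=i..m1 + m2. b i j * y i * y j) = (\<Sum>j=i..m1. b i j * y i * y j) + (\<Sum>j=m1 + 1..m1 + m2. b i j * y i * y j)"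
        by (rule sum.ub_add_nat) (use i in auto)
      also have "(\<Sum>j=m1 + 1..m1 + m2. b i j * y i * y j) = 0"
        using i by (intro sum.neutral) (auto simp: b_def)
      also have "(\<Sum>j=i..m1. b i j * y i * y j) = (\<Sum>j=i..m1. b1 i j * y1 i * y1 j)"
        using i by (intro sum.cong refl) (auto simp: b_def y_def y1_def l_def)
      finally show "(\<Sum>j=i..m1 + m2. b i j * y i * y j) = (\<Sum>j=i..m1. b1 i j * y1 i * y1 j)" by simp
    qed
    also have "(\<Sum>i=m1 + 1..m1 + m2. \<Sum>j=i..m1 + m2. b i j * y i * y j) = (\<Sum>i=1..m2. \<Sum>j=i..m2. b2 i j * y2 i * y2 j)"
    proof -
      have "(\<Sum>i=m1 + 1..m1 + m2. \<Sum>j=i..m1 + m2. b i j * y i * y j) =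
          (\<Sum>i=1 + m1..m2 + m1. \<Sum>j=i..m2 + m1. b i j * y i * y j)" by (simp add: add.commute)
      also have "\<dots> = (\<Sum>i=1..m2. \<Sum>j=i + m1..m2 + m1. b (i + m1) j * y (i + m1) * y j)"
        by (rule sum.shift_bounds_cl_nat_ivl)
      also have "\<dots> = (\<Sum>i=1..m2. \<Sum>j=i..m2. b (i + m1) (j + m1) * y (i + m1) * y (j + m1))"
        by (rule sum.cong[OF refl]) (rule sum.shift_bounds_cl_nat_ivl)
      also have "\<dots> = (\<Sum>i=1..m2. \<Sum>j=i..m2. b2 i j * y2 i * y2 j)"
        by (intro sum.cong refl) (auto simp: b_def y_def y2_def l_def)
      finally show ?thesis .
    qed
    finally have "qform (m1 + m2) b y = qform m1 b1 y1 + qform m2 b2 y2" unfolding qform_def .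
    then show ?thesis using 1 2 by (simp add: y_def y1_def y2_def)
  qed
  then show ?thesis unfolding rep_def by blast
qed

lemma rep_sum:
  assumes "\<And>i. i < s \<Longrightarrow> rep n 2 (F i)"
  shows "rep n (2 * s) (\<lambda>x. \<Sum>i<s. F i x)"
  using assms
proof (induction s)
  case 0 then show ?case using rep_zero by simp
next
  case (Suc s)
  have "rep n (2 * s + 2) (\<lambda>x. (\<Sum>i<s. F i x) + F s x)"
    by (rule rep_add) (use Suc in auto)
  then show ?case by simp
qed

lemma Bq_lin: "Bq n a x z = lin n (\<lambda>p. Bq n a (delta p) z) x"
  unfolding lin_def by (subst Bq_basis) (simp add: mult.commute)

lemma rank_or_witness:
  fixes a :: "nat \<Rightarrow> nat \<Rightarrow> 'a::{field,finite}"
  assumes ch: "CHAR('a) = 2" and rk: "\<not> qrank n a \<le> 2 * k"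
  shows "(\<exists>e f. sympl n a (k + 1) e f) \<or>
    (\<exists>e f z. sympl n a k e f \<and> (\<forall>j<k. Bq n a z (e j) = 0 \<and> Bq n a z (f j) = 0) \<and> qform n a z \<noteq> 0)"
proof -
  from symp_exists[OF ch, of n a "k + 1"]
  show ?thesis
  proof
    assume "\<exists>e f. sympl n a (k + 1) e f" then show ?thesis by blast
  next
    assume "\<exists>s'<k + 1. \<exists>e f. sympl n a s' e f \<and> (\<forall>x y. Bq n a (proj n a s' e f x) (proj n a s' e f y) = 0)"
    then obtain s e f where s0: "s < k + 1" and sy: "sympl n a s e f"
      and iso0: "\<forall>x y. Bq n a (proj n a s e f x) (proj n a s e f y) = 0" by blast
    have s: "s \<le> k" using s0 by simp
    have iso: "\<And>x y. Bq n a (proj n a s e f x) (proj n a s e f y) = 0" using iso0 by blast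
    define blk where "blk i x = qform n a (e i) * (Bq n a x (f i))^2 + Bq n a x (f i) * Bq n a x (e i)
            + qform n a (f i) * (Bq n a x (e i))^2" for i x
    have D: "qform n a x = (\<Sum>i<s. blk i x) + qform n a (proj n a s e f x)" for x
      unfolding blk_def by (rule decomp[OF sy])
    have Rb: "rep n (2 * s) (\<lambda>x. \<Sum>i<s. blk i x)"
    proof (rule rep_sum)
      fix i
      from rep_blk[of n "qform n a (e i)" "\<lambda>p. Bq n a (delta p) (f i)" "\<lambda>p. Bq n a (delta p) (e i)" "qform n a (f i)"]
      show "rep n 2 (blk i)" by (rule rep_cong) (simp only: blk_def Bq_lin[symmetric])
    qed
    obtain r where r: "\<And>x. qform n a (proj n a s e f x) = (\<Sum>p=1..n. r p * x p) ^ 2"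
      using rad_square[OF ch iso] by blast
    show ?thesis
    proof (cases "s = k \<and> (\<exists>x. qform n a (proj n a s e f x) \<noteq> 0)")
      case True
      then obtain x where s: "s = k" and x: "qform n a (proj n a s e f x) \<noteq> 0" by blast
      have "\<forall>j<k. Bq n a (proj n a s e f x) (e j) = 0 \<and> Bq n a (proj n a s e f x) (f j) = 0"
        using proj_orth[OF sy] s by auto
      then show ?thesis using sy x s by blast
    next
      case False
      show ?thesis
      proof (cases "\<forall>x. qform n a (proj n a s e f x) = 0")
        case True
        have "rep n (2 * s + 0) (\<lambda>x. (\<Sum>i<s. blk i x) + 0)" by (rule rep_add[OF Rb rep_zero])
        then have "rep n (2 * s) (\<lambda>x. (\<Sum>i<s. blk i x) + 0)" by simp
        then have "rep n (2 * s) (qform n a)" by (rule rep_cong) (use D True in auto)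
        then have "qrank n a \<le> 2 * s" by (rule rep_qrank)
        then show ?thesis using rk s by auto
      next
        case False2: False
        then have sk: "s < k" using False s by auto
        have "rep n (2 * s + 1) (\<lambda>x. (\<Sum>i<s. blk i x) + (lin n r x) ^ 2)"
          by (rule rep_add[OF Rb rep_sq])
        then have "rep n (2 * s + 1) (qform n a)" by (rule rep_cong) (use D r in \<open>auto simp: lin_def\<close>)
        then have "qrank n a \<le> 2 * s + 1" by (rule rep_qrank)
        then show ?thesis using rk sk by auto
      qed
    qed
  qed
qed



lemma pf_std:
  assumes sy: "sympl n a s e f"
    and v: "\<And>t. t < 2 * s \<Longrightarrow> v t = (if even t then e (t div 2) else f (t div 2))"
  shows "t + r \<le> s \<Longrightarrow> pf (gram n a v) {2 * t..<2 * t + 2 * r} = 1"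
proof (induction r arbitrary: t)
  case 0 then show ?case by simp
next
  case (Suc r)
  define J where "J = {2 * t..<2 * t + 2 * Suc r}"
  have ne: "J \<noteq> {}" and fin: "finite J" by (auto simp: J_def)
  have mn: "Min J = 2 * t" unfolding J_def by (rule Min_eqI) auto
  have "pf (gram n a v) J = (\<Sum>j\<in>J - {2 * t}. gram n a v (2 * t) j * pf (gram n a v) (J - {2 * t, j}))"
    using pf_rec[OF fin ne] mn by simp
  also have "\<dots> = gram n a v (2 * t) (2 * t + 1) * pf (gram n a v) (J - {2 * t, 2 * t + 1}) +
      (\<Sum>j\<in>J - {2 * t} - {2 * t + 1}. gram n a v (2 * t) j * pf (gram n a v) (J - {2 * t, j}))"
    by (subst sum.remove[of _ "2 * t + 1"]) (auto simp: J_def)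
  also have "(\<Sum>j\<in>J - {2 * t} - {2 * t + 1}. gram n a v (2 * t) j * pf (gram n a v) (J - {2 * t, j})) = 0"
  proof (rule sum.neutral, intro ballI)
    fix j assume j: "j \<in> J - {2 * t} - {2 * t + 1}"
    then have js: "j < 2 * s" "j div 2 < s" "j div 2 \<noteq> t \<or> even j" using Suc.prems by (auto simp: J_def)
    have t2: "2 * t < 2 * s" using Suc.prems by simp
    have "gram n a v (2 * t) j = 0"
      using sy js t2 j unfolding gram_def sympl_def by (auto simp: v)
    then show "gram n a v (2 * t) j * pf (gram n a v) (J - {2 * t, j}) = 0" by simp
  qed
  also have "gram n a v (2 * t) (2 * t + 1) = 1"
  proof -
    have "2 * t + 1 < 2 * s" "t < s" using Suc.prems by auto
    then show ?thesis using sy unfolding gram_def sympl_def by (simp add: v)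
  qed
  also have "J - {2 * t, 2 * t + 1} = {2 * (t + 1)..<2 * (t + 1) + 2 * r}" by (auto simp: J_def)
  also have "pf (gram n a v) {2 * (t + 1)..<2 * (t + 1) + 2 * r} = 1"
    by (rule Suc.IH) (use Suc.prems in simp)
  finally show ?case by (simp add: J_def)
qed

section \<open>Vanishing on forms of low rank\<close>

lemma qrank_witness:
  obtains b l where "\<forall>x. qform n a x = qform (qrank n a) b (\<lambda>k. \<Sum>i=1..n. l k i * x i)"
proof -
  have "\<exists>(b :: nat \<Rightarrow> nat \<Rightarrow> 'a) (l :: nat \<Rightarrow> nat \<Rightarrow> 'a). \<forall>x. qform n a x = qform n b (\<lambda>k. \<Sum>i=1..n. l k i * x i)"
  proof (intro exI allI)
    fix x
    show "qform n a x = qform n a (\<lambda>k. \<Sum>i=1..n. (if k = i then 1 else 0) * x i)"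
    proof (rule qform_cong)
      fix k assume k: "k \<in> {1..n}"
      have "(\<Sum>i=1..n. (if k = i then 1 else 0) * x i) = (\<Sum>i=1..n. if k = i then x i else 0)"
        by (rule sum.cong) auto
      then show "x k = (\<Sum>i=1..n. (if k = i then 1 else 0) * x i)" using k by simp
    qed
  qed
  then have "\<exists>m. \<exists>(b :: nat \<Rightarrow> nat \<Rightarrow> 'a) (l :: nat \<Rightarrow> nat \<Rightarrow> 'a). \<forall>x. qform n a x = qform m b (\<lambda>k. \<Sum>i=1..n. l k i * x i)"
    by blast
  then have "\<exists>(b :: nat \<Rightarrow> nat \<Rightarrow> 'a) (l :: nat \<Rightarrow> nat \<Rightarrow> 'a). \<forall>x. qform n a x = qform (qrank n a) b (\<lambda>k. \<Sum>i=1..n. l k i * x i)"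
    unfolding qrank_def by (rule LeastI_ex)
  then show ?thesis using that by blast
qed

lemma gram_transfer:
  assumes "\<forall>x. qform n a x = qform m b (\<lambda>k. \<Sum>i=1..n. l k i * x i)"
  shows "gram n a v = gram m b (\<lambda>t k. \<Sum>i=1..n. l k i * v t i)"
proof (intro ext)
  fix x y
  have "(\<lambda>k. \<Sum>i=1..n. l k i * (v x i + v y i)) = (\<lambda>k. (\<Sum>i=1..n. l k i * v x i) + (\<Sum>i=1..n. l k i * v y i))"
    by (simp add: distrib_left sum.distrib)
  then show "gram n a v x y = gram m b (\<lambda>t k. \<Sum>i=1..n. l k i * v t i) x y"
    unfolding gram_def Bq_def using assms by simp
qed

lemma vanish_pf:
  fixes a :: "nat \<Rightarrow> nat \<Rightarrow> 'a::field"
  assumes ch: "CHAR('a) = 2" and fin: "finite J" and rk: "qrank n a < card J"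
  shows "pf (gram n a v) J = 0"
proof -
  obtain b l where bl: "\<forall>x. qform n a x = qform (qrank n a) b (\<lambda>k. \<Sum>i=1..n. l k i * x i)"
    using qrank_witness by blast
  show ?thesis unfolding gram_transfer[OF bl] by (rule pf_dep_zero[OF ch fin rk])
qed

definition Wv :: "nat \<Rightarrow> (nat \<Rightarrow> nat \<Rightarrow> 'a::field) \<Rightarrow> nat set \<Rightarrow> (nat \<Rightarrow> nat \<Rightarrow> 'a) \<Rightarrow> nat \<Rightarrow> 'a" where
  "Wv n a J v = (\<lambda>p. \<Sum>t\<in>J. pf (gram n a v) (J - {t}) * v t p)"

lemma vanish_W:
  fixes a :: "nat \<Rightarrow> nat \<Rightarrow> 'a::field"
  assumes ch: "CHAR('a) = 2" and fin: "finite J" and rk: "qrank n a < card J"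
  shows "qform n a (Wv n a J v) = 0"
proof -
  obtain b l where bl: "\<forall>x. qform n a x = qform (qrank n a) b (\<lambda>k. \<Sum>i=1..n. l k i * x i)"
    using qrank_witness by blast
  define u where "u = (\<lambda>t k. \<Sum>i=1..n. l k i * v t i)"
  have "qform n a (Wv n a J v) = qform (qrank n a) b (\<lambda>k. \<Sum>i=1..n. l k i * Wv n a J v i)"
    using bl by simp
  also have "\<dots> = qform (qrank n a) b (\<lambda>k. 0)"
  proof (rule qform_cong)
    fix k assume k: "k \<in> {1..qrank n a}"
    have "(\<Sum>i=1..n. l k i * Wv n a J v i) = (\<Sum>i=1..n. \<Sum>t\<in>J. pf (gram (qrank n a) b u) (J - {t}) * (l k i * v t i))"
      unfolding Wv_def gram_transfer[OF bl] u_def by (simp add: sum_distrib_left mult_ac)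
    also have "\<dots> = (\<Sum>t\<in>J. pf (gram (qrank n a) b u) (J - {t}) * u t k)"
      unfolding u_def by (subst sum.swap) (simp add: sum_distrib_left)
    also have "\<dots> = 0" by (rule W_dep_zero[OF ch fin rk k])
    finally show "(\<Sum>i=1..n. l k i * Wv n a J v i) = 0" .
  qed
  also have "\<dots> = 0" by (rule qform_zero)
  finally show ?thesis .
qed

lemma HP_W:
  assumes "finite J" "\<And>t. t \<in> J \<Longrightarrow> card (J - {t}) div 2 = d"
  shows "HP n d (\<lambda>a. Wv n a J v p)"
  unfolding Wv_def
proof (rule HP_sum[OF assms(1)])
  fix t assume t: "t \<in> J"
  have "HP n (card (J - {t}) div 2) (\<lambda>a. v t p * pf (gram n a v) (J - {t}))"
    using HP_scale[OF HP_pf[of "J - {t}" n v], of "v t p"] assms(1) by simp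
  then show "HP n d (\<lambda>a. pf (gram n a v) (J - {t}) * v t p)"
    by (rule HP_cong) (auto simp: mult.commute assms(2)[OF t])
qed

lemma HP_qform_W:
  assumes "finite J" "\<And>t. t \<in> J \<Longrightarrow> card (J - {t}) div 2 = d"
  shows "HP n (1 + d + d) (\<lambda>a. qform n a (Wv n a J v))"
  unfolding qform_def
proof (rule HP_sum, simp, rule HP_sum, simp)
  fix i j assume "i \<in> {1..n}" "j \<in> {i..n}"
  then have ij: "(i, j) \<in> qvars n" by (auto simp: qvars_def)
  show "HP n (1 + d + d) (\<lambda>a. a i j * Wv n a J v i * Wv n a J v j)"
    by (rule HP_mult[OF HP_mult[OF HP_var[OF ij] HP_W[OF assms]] HP_W[OF assms]])
qed



lemma finite_homog:
  "finite {p :: ((nat \<times> nat) \<Rightarrow> nat) \<Rightarrow> 'a::{field,finite}. homog_poly n d p}"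
proof -
  let ?S = "{p :: ((nat \<times> nat) \<Rightarrow> nat) \<Rightarrow> 'a. homog_poly n d p}"
  have sub: "(\<lambda>p. restrict p (hmonos n d)) ` ?S \<subseteq> PiE (hmonos n d) (\<lambda>_. UNIV)" by auto
  have inj: "inj_on (\<lambda>p. restrict p (hmonos n d)) ?S"
  proof (rule inj_onI)
    fix p q assume h: "p \<in> ?S" "q \<in> ?S" "restrict p (hmonos n d) = restrict q (hmonos n d)"
    show "p = q"
    proof (rule ext)
      fix e
      show "p e = q e"
      proof (cases "e \<in> hmonos n d")
        case True
        have "restrict p (hmonos n d) e = restrict q (hmonos n d) e" using h(3) by simp
        then show ?thesis using True by simp
      next
        case False
        have hp: "\<forall>e. p e \<noteq> 0 \<longrightarrow> e \<in> hmonos n d" "\<forall>e. q e \<noteq> 0 \<longrightarrow> e \<in> hmonos n d"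
          using h(1,2) by (simp_all add: homog_poly_def)
        then have "p e = 0" "q e = 0" using False by blast+
        then show ?thesis by simp
      qed
    qed
  qed
  have "finite (PiE (hmonos n d) (\<lambda>_. UNIV :: 'a set))" by (intro finite_PiE finite_hmonos) simp
  then have "finite ((\<lambda>p. restrict p (hmonos n d)) ` ?S)" using sub finite_subset by blast
  then show ?thesis using inj finite_imageD by blast
qed

lemma nonzero_entry:
  assumes "\<not> qrank n a \<le> R"
  shows "\<exists>i j. (i, j) \<in> qvars n \<and> a i j \<noteq> 0"
proof (rule ccontr)
  assume "\<not> (\<exists>i j. (i, j) \<in> qvars n \<and> a i j \<noteq> 0)"
  then have z: "\<And>i j. i \<in> {1..n} \<Longrightarrow> j \<in> {i..n} \<Longrightarrow> a i j = 0" by (auto simp: qvars_def)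
  have "qform n a x = 0" for x unfolding qform_def using z by (intro sum.neutral ballI) auto
  then have "rep n 0 (qform n a)" using rep_cong[OF rep_zero] by metis
  then have "qrank n a \<le> 0" by (rule rep_qrank)
  then show False using assms by simp
qed

lemma pad:
  assumes hf: "HP n d0 f" and le: "d0 \<le> D" and ij: "(i, j) \<in> qvars n" "a i j \<noteq> 0"
    and fa: "f a \<noteq> 0"
  shows "HP n D (\<lambda>a'. f a' * a' i j ^ (D - d0)) \<and> (\<lambda>a'. f a' * a' i j ^ (D - d0)) a \<noteq> 0"
proof
  have "HP n (d0 + (D - d0) * 1) (\<lambda>a'. f a' * a' i j ^ (D - d0))"
    by (rule HP_mult[OF hf HP_power[OF HP_var[OF ij(1)]]])
  then show "HP n D (\<lambda>a'. f a' * a' i j ^ (D - d0))" by (rule HP_cong) (use le in auto)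
  show "(\<lambda>a'. f a' * a' i j ^ (D - d0)) a \<noteq> 0" using fa ij by simp
qed

lemma witness:
  fixes a :: "nat \<Rightarrow> nat \<Rightarrow> 'a::{field,finite}"
  assumes ch: "CHAR('a) = 2" and rk: "\<not> qrank n a \<le> 2 * k"
  shows "\<exists>g. HP n (2 * k + 1) g \<and> (\<forall>a'. qrank n a' \<le> 2 * k \<longrightarrow> g a' = 0) \<and> g a \<noteq> 0"
proof -
  obtain i j where ij: "(i, j) \<in> qvars n" "a i j \<noteq> 0" using nonzero_entry[OF rk] by blast
  have main: "\<exists>d0 f0. d0 \<le> 2 * k + 1 \<and> HP n d0 f0 \<and> (\<forall>a'. qrank n a' \<le> 2 * k \<longrightarrow> f0 a' = 0) \<and> f0 a \<noteq> 0"
    using rank_or_witness[OF ch rk]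
  proof
    assume "\<exists>e f. sympl n a (k + 1) e f"
    then obtain e f where sy: "sympl n a (k + 1) e f" by blast
    define v where "v t = (if even t then e (t div 2) else f (t div 2))" for t
    define J where "J = {0..<2 * (k + 1)}"
    have cJ: "card J = 2 * k + 2" by (simp add: J_def)
    have "HP n (card J div 2) (\<lambda>a'. pf (gram n a' v) J)" by (rule HP_pf) (simp add: J_def)
    moreover have "\<forall>a'. qrank n a' \<le> 2 * k \<longrightarrow> pf (gram n a' v) J = 0"
      using vanish_pf[OF ch, of J] cJ by (auto simp: J_def)
    moreover have "pf (gram n a v) J = 1"
      using pf_std[OF sy, of v 0 "k + 1"] by (simp add: v_def J_def)
    ultimately show ?thesis using cJ by (intro exI[of _ "card J div 2"] exI[of _ "\<lambda>a'. pf (gram n a' v) J"]) auto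
  next
    assume "\<exists>e f z. sympl n a k e f \<and> (\<forall>j<k. Bq n a z (e j) = 0 \<and> Bq n a z (f j) = 0) \<and> qform n a z \<noteq> 0"
    then obtain e f z where sy: "sympl n a k e f" and orth: "\<And>j. j < k \<Longrightarrow> Bq n a z (e j) = 0 \<and> Bq n a z (f j) = 0"
      and qz: "qform n a z \<noteq> 0" by blast
    define v where "v t = (if t < 2 * k then (if even t then e (t div 2) else f (t div 2)) else z)" for t
    define J where "J = {0..<2 * k + 1}"
    have fJ: "finite J" by (simp add: J_def)
    have cJ: "card J = 2 * k + 1" by (simp add: J_def)
    have cJt: "card (J - {t}) div 2 = k" if "t \<in> J" for t using that fJ cJ by simp
    have "HP n (1 + k + k) (\<lambda>a'. qform n a' (Wv n a' J v))" by (rule HP_qform_W[OF fJ cJt])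
    moreover have "\<forall>a'. qrank n a' \<le> 2 * k \<longrightarrow> qform n a' (Wv n a' J v) = 0"
      using vanish_W[OF ch fJ] cJ by auto
    moreover have "Wv n a J v = z"
    proof -
      have P: "pf (gram n a v) (J - {t}) = (if t = 2 * k then 1 else 0)" if t: "t \<in> J" for t
      proof (cases "t = 2 * k")
        case True
        have "J - {t} = {2 * 0..<2 * 0 + 2 * k}" using True by (auto simp: J_def)
        then show ?thesis using pf_std[OF sy, of v 0 k] True by (simp add: v_def)
      next
        case False
        have "pf (gram n a v) (J - {t}) = 0"
        proof (rule pf_zero_row)
          show "finite (J - {t})" using fJ by simp
          show "2 * k \<in> J - {t}" using False by (simp add: J_def)
          show "gram n a v x y = gram n a v y x" for x y by (rule gram_sym)
          fix y assume y: "y \<in> J - {t}"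
          show "gram n a v (2 * k) y = 0"
          proof (cases "y < 2 * k")
            case True
            then show ?thesis using orth[of "y div 2"] by (auto simp: gram_def v_def)
          next
            case False
            then have "y = 2 * k" using y by (auto simp: J_def)
            then show ?thesis by (simp add: gram_def v_def Bq_diag[OF ch])
          qed
        qed
        then show ?thesis using False by simp
      qed
      show ?thesis
      proof (rule ext)
        fix p
        have "Wv n a J v p = (\<Sum>t\<in>J. if t = 2 * k then v t p else 0)"
          unfolding Wv_def by (intro sum.cong refl) (simp add: P)
        also have "\<dots> = z p" using fJ by (simp add: J_def v_def)
        finally show "Wv n a J v p = z p" .
      qed
    qed
    ultimately show ?thesis using qz
      by (intro exI[of _ "1 + k + k"] exI[of _ "\<lambda>a'. qform n a' (Wv n a' J v)"]) auto
  qed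
  then obtain d0 f0 where d0: "d0 \<le> 2 * k + 1" and hf: "HP n d0 f0"
    and van: "\<forall>a'. qrank n a' \<le> 2 * k \<longrightarrow> f0 a' = 0" and fa: "f0 a \<noteq> 0" by blast
  from pad[OF hf d0 ij fa] van show ?thesis by (intro exI[of _ "\<lambda>a'. f0 a' * a' i j ^ (2 * k + 1 - d0)"]) auto
qed

theorem lemma1:
  fixes n R :: nat
  assumes "CHAR('a::{field,finite}) = 2"
    and "n \<ge> 1"
    and "even R"
  shows "\<exists>P :: (((nat \<times> nat) \<Rightarrow> nat) \<Rightarrow> 'a) set.
           finite P \<and> (\<forall>p\<in>P. homog_poly n (R + 1) p) \<and>
           (\<forall>a :: nat \<Rightarrow> nat \<Rightarrow> 'a.
              (\<forall>p\<in>P. eval_homog n (R + 1) p a = 0) \<longleftrightarrow> qrank n a \<le> R)"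
proof -
  obtain k where R: "R = 2 * k" using assms(3) by (elim evenE)
  define P where "P = {p :: ((nat \<times> nat) \<Rightarrow> nat) \<Rightarrow> 'a. homog_poly n (R + 1) p \<and>
      (\<forall>a. qrank n a \<le> R \<longrightarrow> eval_homog n (R + 1) p a = 0)}"
  have "finite P" unfolding P_def by (rule finite_subset[OF _ finite_homog]) auto
  moreover have "\<forall>p\<in>P. homog_poly n (R + 1) p" by (simp add: P_def)
  moreover have "(\<forall>p\<in>P. eval_homog n (R + 1) p a = 0) \<longleftrightarrow> qrank n a \<le> R" for a :: "nat \<Rightarrow> nat \<Rightarrow> 'a"
  proof
    assume "qrank n a \<le> R" then show "\<forall>p\<in>P. eval_homog n (R + 1) p a = 0" by (simp add: P_def)
  next
    assume all: "\<forall>p\<in>P. eval_homog n (R + 1) p a = 0"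
    show "qrank n a \<le> R"
    proof (rule ccontr)
      assume rk: "\<not> qrank n a \<le> R"
      obtain g where g: "HP n (2 * k + 1) g" "\<forall>a'. qrank n a' \<le> 2 * k \<longrightarrow> g a' = 0" "g a \<noteq> 0"
        using witness[OF assms(1), of n a k] rk R by blast
      obtain p where p: "homog_poly n (R + 1) p" "\<forall>a. g a = eval_homog n (R + 1) p a"
        using g(1) R unfolding HP_def by auto
      have "p \<in> P" using p g(2) R by (auto simp: P_def)
      then show False using all p g(3) by auto
    qed
  qed
  ultimately show ?thesis by blast
qed

end
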